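(* Let $q$ be a prime power and let $k\ge1$, $n_{\mathrm T}\ge k$, $1\le n\le n_{\mathrm T}$ and $0\le x\le k$ be integers. Consider $n_{\mathrm T}$ transmitted packets whose coding vectors in $\mathbb{F}_q^k$ are $\mathbf{e}_1,\dots,\mathbf{e}_k$ (the $k$ source packets) together with $n_{\mathrm T}-k$ further vectors (coded packets) that are independent and uniformly distributed on $\mathbb{F}_q^k$. A receiver obtains a uniformly random $n$-element subset of the $n_{\mathrm T}$ packets, chosen independently of the random coding vectors; let $\mathbf{M}$ be the $n\times k$ matrix whose rows are the coding vectors of the received packets, and $X=\{i\in\{1,\dots,k\}:\mathbf{e}_i\in\mathrm{Row}(\mathbf{M})\}$. Then, with $h_{\min}=\max(0,n-n_{\mathrm T}+k)$ and $x_{\min}=\max(0,x-h)$, $$P_{\mathrm s}(|X|\ge x\mid N=n)=\frac{1}{\binom{n_{\mathrm T}}{n}}\sum_{r=x}^{\min(n,k)}\sum_{h=h_{\min}}^{r}\Bigg(\binom{k}{h}\binom{n_{\mathrm T}-k}{n-h}q^{-(n-h)(k-h)}\prod_{\ell=0}^{r-h-1}(q^{n-h}-q^\ell)\cdot\sum_{i=x_{\min}}^{r-h}\binom{k-h}{i}\sum_{j=0}^{k-h-i}(-1)^j\binom{k-h-i}{j}\binom{k-h-i-j}{r-h-i-j}_q\Bigg),$$ where an empty sum equals $0$, an empty product equals $1$, and $\binom{a}{b}=0$ if $b<0$ or $b>a$.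
   Context: $\mathbf{e}_i$ denotes the $i$-th standard unit vector of $\mathbb{F}_q^k$, and $\mathrm{Row}(\mathbf{M})$ is the row space of $\mathbf{M}$. $N$ denotes the number of received packets (rows of $\mathbf{M}$). $\binom{m}{d}$ is the ordinary binomial coefficient. $\binom{m}{d}_q$ is the Gaussian binomial coefficient, i.e. the number of $d$-dimensional subspaces of an $m$-dimensional vector space over $\mathbb{F}_q$, $\binom{m}{d}_q=\prod_{i=0}^{d-1}\frac{q^{m}-q^{i}}{q^{d}-q^{i}}$ for $0\le d\le m$. By convention $\binom{m}{d}_q=0$ if $d<0$ or $d>m$. *)

theory Defs
  imports "HOL-Probability.Probability"
begin

text \<open>Vectors of F_q^k are represented as functions nat => 'a on the index set {0..<k}
  (indices are 0-based).\<close>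

definition unit_vec :: "nat \<Rightarrow> nat \<Rightarrow> nat \<Rightarrow> 'a::zero_neq_one" where
  "unit_vec k i = (\<lambda>j\<in>{0..<k}. if j = i then 1 else 0)"

text \<open>Coding vector of transmitted packet p (0 <= p < nT): the first k packets are the source
  packets e_1..e_k, packet p >= k is the coded packet with random vector v (p - k).\<close>
definition coding_vec :: "nat \<Rightarrow> (nat \<Rightarrow> nat \<Rightarrow> 'a::zero_neq_one) \<Rightarrow> nat \<Rightarrow> nat \<Rightarrow> 'a" where
  "coding_vec k v p = (if p < k then unit_vec k p else v (p - k))"

definition in_row_space :: "nat \<Rightarrow> (nat \<Rightarrow> nat \<Rightarrow> 'a::field) \<Rightarrow> nat set \<Rightarrow> (nat \<Rightarrow> 'a) \<Rightarrow> bool" where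
  "in_row_space k rw S u \<longleftrightarrow> (\<exists>c. \<forall>j<k. u j = (\<Sum>p\<in>S. c p * rw p j))"

definition recovered :: "nat \<Rightarrow> (nat \<Rightarrow> nat \<Rightarrow> 'a::field) \<Rightarrow> nat set \<Rightarrow> nat set" where
  "recovered k v S = {i. i < k \<and> in_row_space k (coding_vec k v) S (unit_vec k i)}"

definition binom_int :: "int \<Rightarrow> int \<Rightarrow> real" where
  "binom_int a b = (if b < 0 \<or> b > a then 0 else real (nat a choose nat b))"

definition qbinom :: "real \<Rightarrow> int \<Rightarrow> int \<Rightarrow> real" where
  "qbinom q m d = (if d < 0 \<or> d > m then 0 else
     (\<Prod>i\<in>{0..<d}. (q powi m - q powi i) / (q powi d - q powi i)))"

end

theory Submission
  imports Defs "HOL-Library.Function_Algebras"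
begin

interpretation fv: vector_space "\<lambda>(c::'a::field) (f::nat \<Rightarrow> 'a). (\<lambda>j. c * f j)"
  by unfold_locales (auto simp: fun_eq_iff algebra_simps)

lemma card_ge2: "2 \<le> CARD('a::{field,finite})"
proof -
  have "{0::'a, 1} \<subseteq> UNIV" by simp
  hence "card {0::'a,1} \<le> CARD('a)" by (intro card_mono) simp_all
  thus ?thesis by simp
qed

lemma card_span_insert_notin:
  fixes w :: "nat \<Rightarrow> 'a::{field,finite}"
  assumes "w \<notin> fv.span U"
  shows "card (fv.span (insert w U)) = CARD('a) * card (fv.span U)"
proof -
  let ?f = "\<lambda>(c::'a,y). (\<lambda>j. c * w j) + y"
  have eq: "fv.span (insert w U) = ?f ` (UNIV \<times> fv.span U)"
  proof (rule set_eqI)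
    fix x
    show "x \<in> fv.span (insert w U) \<longleftrightarrow> x \<in> ?f ` (UNIV \<times> fv.span U)"
    proof
      assume "x \<in> fv.span (insert w U)"
      then obtain k where k: "x - (\<lambda>j. k * w j) \<in> fv.span U" unfolding fv.span_insert by blast
      have "x = ?f (k, x - (\<lambda>j. k * w j))" by (auto simp: fun_eq_iff)
      with k show "x \<in> ?f ` (UNIV \<times> fv.span U)" by blast
    next
      assume "x \<in> ?f ` (UNIV \<times> fv.span U)"
      then obtain c y where y: "y \<in> fv.span U" and x: "x = (\<lambda>j. c * w j) + y" by auto
      have "x - (\<lambda>j. c * w j) = y" using x by (auto simp: fun_eq_iff)
      with y show "x \<in> fv.span (insert w U)" unfolding fv.span_insert by blast
    qed
  qed
  have inj: "inj_on ?f (UNIV \<times> fv.span U)"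
  proof (rule inj_onI, clarify)
    fix c y c' y'
    assume y: "y \<in> fv.span U" and y': "y' \<in> fv.span U"
      and e: "(\<lambda>j. c * w j) + y = (\<lambda>j. c' * w j) + y'"
    have d: "(\<lambda>j. (c - c') * w j) = y' - y" using e
      by (auto simp: fun_eq_iff algebra_simps)
    show "c = c' \<and> y = y'"
    proof (cases "c = c'")
      case True
      with e show ?thesis by (auto simp: fun_eq_iff)
    next
      case False
      have "y' - y \<in> fv.span U" by (rule fv.span_diff[OF y' y])
      hence "(\<lambda>j. inverse (c - c') * (y' - y) j) \<in> fv.span U" by (rule fv.span_scale)
      moreover have "(\<lambda>j. inverse (c - c') * (y' - y) j) = w"
        using False by (auto simp: fun_eq_iff simp flip: d)
      ultimately show ?thesis using assms by simp
    qed
  qed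
  show ?thesis unfolding eq card_image[OF inj] card_cartesian_product by simp
qed

lemma span_card_pow:
  fixes S :: "(nat \<Rightarrow> 'a::{field,finite}) set"
  assumes "finite S"
  shows "\<exists>e. card (fv.span S) = CARD('a) ^ e"
  using assms
proof (induction S rule: finite_induct)
  case empty
  show ?case by (rule exI[of _ 0]) (simp add: fv.span_empty)
next
  case (insert x F)
  then obtain e where e: "card (fv.span F) = CARD('a) ^ e" by blast
  show ?case
  proof (cases "x \<in> fv.span F")
    case True
    then show ?thesis using e fv.span_redundant by metis
  next
    case False
    then show ?thesis using e card_span_insert_notin[OF False] by (metis power_Suc)
  qed
qed

lemma pow_inj: "CARD('a::{field,finite}) ^ a = CARD('a) ^ b \<longleftrightarrow> a = b"
  using card_ge2[where 'a='a] by (simp add: power_inject_exp)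

lemma pow_le: "CARD('a::{field,finite}) ^ a \<le> CARD('a) ^ b \<longleftrightarrow> a \<le> b"
  using card_ge2[where 'a='a] by (simp add: power_increasing_iff)

fun cnt :: "nat \<Rightarrow> nat \<Rightarrow> nat \<Rightarrow> nat \<Rightarrow> nat" where
  "cnt q d 0 e = (if e = 0 then 1 else 0)"
| "cnt q d (Suc n) e = q^e * cnt q d n e + (if e = 0 then 0 else (q^d - q^(e-1)) * cnt q d n (e-1))"

lemma sum_if_const_nat: "finite X \<Longrightarrow> (\<Sum>x\<in>X. if P x then (c::nat) else 0) = c * card {x\<in>X. P x}"
  by (simp add: sum.inter_filter[symmetric])

lemma card_pos_finite: "card W = CARD('a::{field,finite})^d \<Longrightarrow> finite W"
  using card_ge2[where 'a='a] by (metis card_eq_0_iff not_numeral_le_zero power_not_zero zero_le_numeral)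

lemma fibre_count:
  fixes W :: "(nat \<Rightarrow> 'a::{field,finite}) set"
  assumes W: "fv.subspace W" "card W = CARD('a)^d" and U: "U \<subseteq> W"
  shows "card {y \<in> W. card (fv.span (insert y U)) = CARD('a)^e} =
     (if card (fv.span U) = CARD('a)^e then CARD('a)^e else 0) +
     (if e \<noteq> 0 \<and> card (fv.span U) = CARD('a)^(e-1) then CARD('a)^d - CARD('a)^(e-1) else 0)"
proof -
  let ?q = "CARD('a)" and ?s = "card (fv.span U)"
  have q2: "?q \<ge> 2" by (rule card_ge2)
  have sub: "fv.span U \<subseteq> W" using fv.span_minimal[OF U W(1)] .
  have finW: "finite W" using card_pos_finite[OF W(2)] .
  have finS: "finite (fv.span U)" using finite_subset[OF sub finW] .
  have eq: "{y \<in> W. card (fv.span (insert y U)) = ?q^e} = {y \<in> fv.span U. ?s = ?q^e} \<union> {y \<in> W - fv.span U. ?q * ?s = ?q^e}"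
  proof (rule set_eqI)
    fix y show "y \<in> {y \<in> W. card (fv.span (insert y U)) = ?q^e} \<longleftrightarrow> y \<in> {y \<in> fv.span U. ?s = ?q^e} \<union> {y \<in> W - fv.span U. ?q * ?s = ?q^e}"
    proof (cases "y \<in> fv.span U")
      case True
      then have yW: "y \<in> W" using sub by blast
      have sp: "fv.span (insert y U) = fv.span U" by (rule fv.span_redundant[OF True])
      show ?thesis using True yW by (simp add: sp)
    next
      case False
      have sp: "card (fv.span (insert y U)) = ?q * ?s" by (rule card_span_insert_notin[OF False])
      show ?thesis using False by (simp add: sp)
    qed
  qed
  have "card {y \<in> W. card (fv.span (insert y U)) = ?q^e} = card {y \<in> fv.span U. ?s = ?q^e} + card {y \<in> W - fv.span U. ?q * ?s = ?q^e}"
    unfolding eq by (rule card_Un_disjoint) (use finS finW in auto)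
  also have "card {y \<in> fv.span U. ?s = ?q^e} = (if ?s = ?q^e then ?q^e else 0)" by auto
  also have "card {y \<in> W - fv.span U. ?q * ?s = ?q^e} = (if ?q * ?s = ?q^e then ?q^d - ?s else 0)"
  proof -
    have cd: "card {y \<in> W. y \<notin> fv.span U} = ?q^d - ?s" using card_Diff_subset[OF finS sub] W(2) by (simp add: set_diff_eq)
    show ?thesis using cd by auto
  qed
  also have "(?q * ?s = ?q^e) \<longleftrightarrow> (e \<noteq> 0 \<and> ?s = ?q^(e-1))"
  proof (cases e)
    case 0
    then show ?thesis using q2 by auto
  next
    case (Suc e')
    then show ?thesis using q2 by auto
  qed
  finally show ?thesis by auto
qed

lemma card_pairs_sum:
  assumes "finite X" "finite W"
  shows "card {p \<in> W \<times> X. R (fst p) (snd p)} = (\<Sum>g\<in>X. card {y\<in>W. R y g})"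
proof -
  have "card {p \<in> W \<times> X. R (fst p) (snd p)} = (\<Sum>p\<in>W \<times> X. if R (fst p) (snd p) then 1 else 0)"
    using assms by (simp add: sum.inter_filter[symmetric])
  also have "\<dots> = (\<Sum>y\<in>W. \<Sum>g\<in>X. if R y g then 1 else 0)"
    unfolding sum.cartesian_product by (intro sum.cong) (auto simp: case_prod_beta)
  also have "\<dots> = (\<Sum>g\<in>X. \<Sum>y\<in>W. if R y g then 1 else 0)" by (rule sum.swap)
  also have "\<dots> = (\<Sum>g\<in>X. card {y\<in>W. R y g})" using assms by (simp add: sum.inter_filter[symmetric])
  finally show ?thesis .
qed

lemma core_count:
  fixes W :: "(nat \<Rightarrow> 'a::{field,finite}) set"
  assumes W: "fv.subspace W" "card W = CARD('a)^d" and A: "finite A"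
  shows "card {u \<in> A \<rightarrow>\<^sub>E W. card (fv.span (u ` A)) = CARD('a)^e} = cnt CARD('a) d (card A) e"
  using A
proof (induction A arbitrary: e rule: finite_induct)
  case empty
  have e1: "(Suc 0 = CARD('a)^e) = (e = 0)" by (metis One_nat_def pow_inj power_0)
  have "{u \<in> {} \<rightarrow>\<^sub>E W. card (fv.span (u ` {})) = CARD('a)^e} = (if e = 0 then {\<lambda>_. undefined} else {})"
    by (cases "e = 0") (simp_all add: fv.span_empty e1)
  then show ?case by (simp add: e1)
next
  case (insert a A)
  let ?q = "CARD('a)"
  let ?X = "A \<rightarrow>\<^sub>E W"
  let ?f = "\<lambda>(y, g). g(a := y)"
  have finW: "finite W" using card_pos_finite[OF W(2)] .
  have finX: "finite ?X" using finW insert(1) by (simp add: finite_PiE)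
  have inj: "inj_on ?f (W \<times> ?X)" using inj_combinator[OF insert(2), of "\<lambda>_. W"] by simp
  have img: "insert a A \<rightarrow>\<^sub>E W = ?f ` (W \<times> ?X)" using PiE_insert_eq[of a A "\<lambda>_. W"] by simp
  have fim: "?f p ` insert a A = insert (fst p) (snd p ` A)" for p
    using insert(2) by (cases p) auto
  have setEq: "{u \<in> insert a A \<rightarrow>\<^sub>E W. card (fv.span (u ` insert a A)) = ?q^e}
        = ?f ` {p \<in> W \<times> ?X. card (fv.span (?f p ` insert a A)) = ?q^e}" unfolding img by auto
  have "card {u \<in> insert a A \<rightarrow>\<^sub>E W. card (fv.span (u ` insert a A)) = ?q^e}
        = card {p \<in> W \<times> ?X. card (fv.span (?f p ` insert a A)) = ?q^e}"
    unfolding setEq by (rule card_image[OF inj_on_subset[OF inj]]) auto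
  also have "\<dots> = card {p \<in> W \<times> ?X. card (fv.span (insert (fst p) (snd p ` A))) = ?q^e}"
    by (simp only: fim)
  also have "\<dots> = (\<Sum>g\<in>?X. card {y\<in>W. card (fv.span (insert y (g ` A))) = ?q^e})"
    by (rule card_pairs_sum[OF finX finW])
  also have "\<dots> = (\<Sum>g\<in>?X. (if card (fv.span (g`A)) = ?q^e then ?q^e else 0) +
     (if e \<noteq> 0 \<and> card (fv.span (g`A)) = ?q^(e-1) then ?q^d - ?q^(e-1) else 0))"
    by (rule sum.cong[OF refl], rule fibre_count[OF W]) (auto simp: PiE_def Pi_def)
  also have "\<dots> = ?q^e * card {g\<in>?X. card (fv.span (g`A)) = ?q^e} +
      (if e = 0 then 0 else (?q^d - ?q^(e-1)) * card {g\<in>?X. card (fv.span (g`A)) = ?q^(e-1)})"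
    using finX by (simp add: sum.distrib sum_if_const_nat)
  also have "\<dots> = cnt ?q d (card (insert a A)) e"
    using insert by simp
  finally show ?case .
qed

definition II :: "real \<Rightarrow> nat \<Rightarrow> nat \<Rightarrow> real" where "II q m e = (\<Prod>l<e. q^m - q^l)"

lemma II_0[simp]: "II q m 0 = 1" by (simp add: II_def)
lemma II_Suc: "II q m (Suc e) = II q m e * (q^m - q^e)" by (simp add: II_def)
lemma II_Suc_Suc: "II q (Suc m) (Suc e) = (q^(Suc m) - 1) * q^e * II q m e"
proof -
  have "II q (Suc m) (Suc e) = (q^Suc m - q^0) * (\<Prod>l<e. q^Suc m - q^Suc l)"
    unfolding II_def by (rule prod.lessThan_Suc_shift)
  also have "(\<Prod>l<e. q^Suc m - q^Suc l) = (\<Prod>l<e. q * (q^m - q^l))"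
    by (simp add: right_diff_distrib)
  also have "\<dots> = q^e * II q m e" by (simp add: II_def prod.distrib)
  finally show ?thesis by simp
qed
lemma II_zero: "m < e \<Longrightarrow> II q m e = 0"
  unfolding II_def by (rule prod_zero) auto
lemma II_pos: "q > 1 \<Longrightarrow> e \<le> m \<Longrightarrow> II q m e > 0"
  unfolding II_def by (rule prod_pos) (auto intro: power_strict_increasing)

lemma nat_diff_II: "(2::nat) \<le> Q \<Longrightarrow> real (Q^d - Q^e) * II (real Q) d e = (real Q^d - real Q^e) * II (real Q) d e"
proof (cases "e \<le> d")
  case True
  assume "2 \<le> Q"
  then have "Q^e \<le> Q^d" using True by (intro power_increasing) auto
  then show ?thesis by (simp add: of_nat_diff)
next
  case False
  then show ?thesis by (simp add: II_zero)
qed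

lemma alg0: "((s::real) * c1 + r * c0) * ((s - 1) * t * i) = s * (c1 * ((s - 1) * t * i)) + (s - 1) * t * (r * (c0 * i))"
  by (simp add: algebra_simps)

lemma alg1: "(x::real)^Suc e * (A * D * (B * (x^n - x^e))) + (x^Suc e - 1) * x^e * (D * A) * B = A * D * ((x^Suc n - 1) * x^e * B)"
proof -
  have br: "x^Suc e * (x^n - x^e) + (x^Suc e - 1) * x^e = (x^Suc n - 1) * x^e"
    by (simp add: algebra_simps power_add[symmetric])
  have "x^Suc e * (A * D * (B * (x^n - x^e))) + (x^Suc e - 1) * x^e * (D * A) * B = A * D * B * (x^Suc e * (x^n - x^e) + (x^Suc e - 1) * x^e)"
    by (simp add: algebra_simps)
  also have "\<dots> = A * D * ((x^Suc n - 1) * x^e * B)" unfolding br by (simp add: algebra_simps)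
  finally show ?thesis .
qed

lemma cnt_closed:
  assumes Q: "(2::nat) \<le> Q"
  shows "real (cnt Q d n e) * II (real Q) e e = II (real Q) d e * II (real Q) n e"
proof (induction n arbitrary: e)
  case 0
  then show ?case by (cases e) (simp_all add: II_zero)
next
  case (Suc n)
  show ?case
  proof (cases e)
    case 0
    then show ?thesis using Suc[of 0] by simp
  next
    case (Suc e')
    let ?x = "real Q"
    have S1: "II ?x (Suc e') (Suc e') = (?x^Suc e' - 1) * ?x^e' * II ?x e' e'" by (rule II_Suc_Suc)
    have S2: "II ?x d (Suc e') = II ?x d e' * (?x^d - ?x^e')" by (rule II_Suc)
    have S3: "II ?x n (Suc e') = II ?x n e' * (?x^n - ?x^e')" by (rule II_Suc)
    have S4: "II ?x (Suc n) (Suc e') = (?x^Suc n - 1) * ?x^e' * II ?x n e'" by (rule II_Suc_Suc)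
    have IH1: "real (cnt Q d n (Suc e')) * ((?x^Suc e' - 1) * ?x^e' * II ?x e' e') = II ?x d e' * (?x^d - ?x^e') * (II ?x n e' * (?x^n - ?x^e'))"
      using Suc.IH[of "Suc e'"] unfolding S1 S2 S3 .
    have IH0: "real (cnt Q d n e') * II ?x e' e' = II ?x d e' * II ?x n e'" using Suc.IH[of e'] .
    have "real (cnt Q d (Suc n) e) * II ?x e e =
       (?x^Suc e' * real (cnt Q d n (Suc e')) + real (Q^d - Q^e') * real (cnt Q d n e')) * ((?x^Suc e' - 1) * ?x^e' * II ?x e' e')"
      unfolding \<open>e = Suc e'\<close> S1 by simp
    also have "\<dots> = ?x^Suc e' * (real (cnt Q d n (Suc e')) * ((?x^Suc e' - 1) * ?x^e' * II ?x e' e'))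
       + (?x^Suc e' - 1) * ?x^e' * (real (Q^d - Q^e') * (real (cnt Q d n e') * II ?x e' e'))"
      by (rule alg0)
    also have "\<dots> = ?x^Suc e' * (II ?x d e' * (?x^d - ?x^e') * (II ?x n e' * (?x^n - ?x^e')))
       + (?x^Suc e' - 1) * ?x^e' * (real (Q^d - Q^e') * II ?x d e') * II ?x n e'"
      by (simp only: IH1 IH0)
    also have "\<dots> = ?x^Suc e' * (II ?x d e' * (?x^d - ?x^e') * (II ?x n e' * (?x^n - ?x^e')))
       + (?x^Suc e' - 1) * ?x^e' * ((?x^d - ?x^e') * II ?x d e') * II ?x n e'"
      by (simp add: nat_diff_II[OF Q])
    also have "\<dots> = II ?x d e' * (?x^d - ?x^e') * ((?x^Suc n - 1) * ?x^e' * II ?x n e')"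
      by (rule alg1)
    also have "\<dots> = II ?x d e * II ?x (Suc n) e" unfolding \<open>e = Suc e'\<close> S2 S4 by simp
    finally show ?thesis .
  qed
qed

lemma qbinom_II:
  assumes "(2::nat) \<le> Q"
  shows "qbinom (real Q) (int m) (int d) = II (real Q) m d / II (real Q) d d"
proof (cases "m < d")
  case True
  then show ?thesis by (simp add: qbinom_def II_zero)
next
  case False
  have "{0..<int d} = {int 0..<int d}" by simp
  hence "(\<Prod>i\<in>{0..<int d}. (real Q powi int m - real Q powi i) / (real Q powi int d - real Q powi i))
     = (\<Prod>i\<in>{0..<d}. (real Q ^ m - real Q ^ i) / (real Q ^ d - real Q ^ i))"
    by (simp only: prod.atLeast_int_lessThan_int_shift) (simp add: power_int_of_nat o_def)
  also have "\<dots> = II (real Q) m d / II (real Q) d d"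
    by (simp add: II_def prod_dividef atLeast0LessThan)
  finally show ?thesis using False by (simp add: qbinom_def)
qed

lemma PiE_image_sub: "u \<in> A \<rightarrow>\<^sub>E W \<Longrightarrow> u ` A \<subseteq> W"
  by (auto simp: PiE_def Pi_def)

lemma II_pos_nat: "(2::nat) \<le> Q \<Longrightarrow> e \<le> m \<Longrightarrow> II (real Q) m e > 0"
  by (rule II_pos) auto

lemma spanning_count:
  fixes W :: "(nat \<Rightarrow> 'a::{field,finite}) set"
  assumes W: "fv.subspace W" "card W = CARD('a)^d" and A: "finite A"
  shows "real (card {u \<in> A \<rightarrow>\<^sub>E W. fv.span (u ` A) = W}) = II (real CARD('a)) (card A) d"
proof -
  have finW: "finite W" using card_pos_finite[OF W(2)] .
  have eq: "{u \<in> A \<rightarrow>\<^sub>E W. fv.span (u ` A) = W} = {u \<in> A \<rightarrow>\<^sub>E W. card (fv.span (u ` A)) = CARD('a)^d}"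
  proof (rule Collect_cong, rule conj_cong[OF refl])
    fix u assume u: "u \<in> A \<rightarrow>\<^sub>E W"
    have sub: "fv.span (u`A) \<subseteq> W" by (rule fv.span_minimal[OF PiE_image_sub[OF u] W(1)])
    show "fv.span (u ` A) = W \<longleftrightarrow> card (fv.span (u ` A)) = CARD('a)^d"
      using card_subset_eq[OF finW sub] W(2) by auto
  qed
  have c: "real (cnt CARD('a) d (card A) d) * II (real CARD('a)) d d = II (real CARD('a)) d d * II (real CARD('a)) (card A) d"
    by (rule cnt_closed[OF card_ge2])
  have p: "II (real CARD('a)) d d > 0" by (rule II_pos_nat[OF card_ge2]) simp
  show ?thesis unfolding eq core_count[OF W A] using c p by simp
qed

lemma subspace_count:
  fixes W :: "(nat \<Rightarrow> 'a::{field,finite}) set"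
  assumes W: "fv.subspace W" "card W = CARD('a)^d"
  shows "real (card {U. fv.subspace U \<and> U \<subseteq> W \<and> card U = CARD('a)^e}) = II (real CARD('a)) d e / II (real CARD('a)) e e"
proof -
  let ?q = "CARD('a)" and ?x = "real CARD('a)"
  let ?Sub = "{U. fv.subspace U \<and> U \<subseteq> W \<and> card U = ?q^e}"
  let ?A = "{..<e}"
  let ?T = "{u \<in> ?A \<rightarrow>\<^sub>E W. card (fv.span (u ` ?A)) = ?q^e}"
  have finW: "finite W" using card_pos_finite[OF W(2)] .
  have p: "II ?x e e > 0" by (rule II_pos_nat[OF card_ge2]) simp
  have T: "real (card ?T) * II ?x e e = II ?x d e * II ?x e e"
    using core_count[OF W, of ?A e] cnt_closed[OF card_ge2, of d e e] by simp
  have finSub: "finite ?Sub" by (rule finite_subset[of _ "Pow W"]) (use finW in auto)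
  have Teq: "?T = (\<Union>U\<in>?Sub. {u \<in> ?A \<rightarrow>\<^sub>E U. fv.span (u`?A) = U})"
  proof (rule set_eqI, rule iffI)
    fix u assume u: "u \<in> ?T"
    let ?U = "fv.span (u`?A)"
    have uA: "u \<in> ?A \<rightarrow>\<^sub>E W" using u by simp
    have "?U \<in> ?Sub" using u fv.span_minimal[OF PiE_image_sub[OF uA] W(1)] by (simp add: fv.subspace_span)
    moreover have "u \<in> ?A \<rightarrow>\<^sub>E ?U" using uA by (auto simp: PiE_def Pi_def intro: fv.span_base)
    ultimately show "u \<in> (\<Union>U\<in>?Sub. {u \<in> ?A \<rightarrow>\<^sub>E U. fv.span (u`?A) = U})" by blast
  next
    fix u assume "u \<in> (\<Union>U\<in>?Sub. {u \<in> ?A \<rightarrow>\<^sub>E U. fv.span (u`?A) = U})"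
    then obtain U where U: "U \<in> ?Sub" "u \<in> ?A \<rightarrow>\<^sub>E U" "fv.span (u`?A) = U" by blast
    have "u \<in> ?A \<rightarrow>\<^sub>E W" using U(1,2) by (auto simp: PiE_def Pi_def)
    then show "u \<in> ?T" using U by simp
  qed
  have "card ?T = (\<Sum>U\<in>?Sub. card {u \<in> ?A \<rightarrow>\<^sub>E U. fv.span (u`?A) = U})"
    unfolding Teq
  proof (rule card_UN_disjoint[OF finSub])
    show "\<forall>U\<in>?Sub. finite {u \<in> ?A \<rightarrow>\<^sub>E U. fv.span (u`?A) = U}"
      using finW by (auto intro!: finite_PiE intro: finite_subset)
    show "\<forall>U\<in>?Sub. \<forall>U'\<in>?Sub. U \<noteq> U' \<longrightarrow> {u \<in> ?A \<rightarrow>\<^sub>E U. fv.span (u`?A) = U} \<inter> {u \<in> ?A \<rightarrow>\<^sub>E U'. fv.span (u`?A) = U'} = {}"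
      by blast
  qed
  hence "real (card ?T) = (\<Sum>U\<in>?Sub. real (card {u \<in> ?A \<rightarrow>\<^sub>E U. fv.span (u`?A) = U}))" by simp
  also have "\<dots> = (\<Sum>U\<in>?Sub. II ?x e e)"
  proof (rule sum.cong[OF refl])
    fix U assume "U \<in> ?Sub"
    thus "real (card {u \<in> ?A \<rightarrow>\<^sub>E U. fv.span (u`?A) = U}) = II ?x e e"
      using spanning_count[of U e ?A] by simp
  qed
  also have "\<dots> = real (card ?Sub) * II ?x e e" by simp
  finally have "real (card ?Sub) * II ?x e e * II ?x e e = II ?x d e * II ?x e e" using T by simp
  then show ?thesis using p by (simp add: field_simps)
qed

definition VV :: "nat set \<Rightarrow> (nat \<Rightarrow> 'a::zero) set" where "VV C = {f. \<forall>j. j \<notin> C \<longrightarrow> f j = 0}"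
definition ee :: "nat \<Rightarrow> nat \<Rightarrow> 'a::zero_neq_one" where "ee i = (\<lambda>j. if j = i then 1 else 0)"
definition cl :: "nat set \<Rightarrow> (nat \<Rightarrow> 'a::zero) \<Rightarrow> nat \<Rightarrow> 'a" where "cl J x = (\<lambda>i. if i \<in> J then 0 else x i)"

lemma subspace_VV: "fv.subspace (VV C :: (nat \<Rightarrow> 'a::field) set)"
  unfolding fv.subspace_def VV_def by (auto simp: zero_fun_def plus_fun_def)

lemma card_VV:
  assumes "finite C"
  shows "card (VV C :: (nat \<Rightarrow> 'a::{field,finite}) set) = CARD('a)^card C"
proof -
  have "bij_betw (\<lambda>f. restrict f C) (VV C :: (nat \<Rightarrow> 'a) set) (C \<rightarrow>\<^sub>E (UNIV::'a set))"
    by (rule bij_betw_byWitness[where f'="\<lambda>h j. if j \<in> C then h j else 0"])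
       (auto simp: VV_def fun_eq_iff PiE_def extensional_def)
  hence "card (VV C :: (nat \<Rightarrow> 'a) set) = card (C \<rightarrow>\<^sub>E (UNIV::'a set))" by (rule bij_betw_same_card)
  also have "\<dots> = CARD('a)^card C" using assms by (simp add: card_funcsetE)
  finally show ?thesis .
qed

lemma sum_fun_apply: "(sum f A) x = (\<Sum>a\<in>A. f a x)"
  by (induction A rule: infinite_finite_induct) auto

lemma cl_decomp:
  fixes x :: "nat \<Rightarrow> 'a::field"
  assumes "finite J"
  shows "x = cl J x + (\<Sum>j\<in>J. (\<lambda>i. x j * ee j i))"
proof (rule ext)
  fix i
  have "(\<Sum>j\<in>J. (\<lambda>i. x j * ee j i)) i = (\<Sum>j\<in>J. if i = j then x j else 0)"
    unfolding sum_fun_apply by (rule sum.cong) (auto simp: ee_def)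
  also have "\<dots> = (if i \<in> J then x i else 0)" using assms by (simp add: sum.delta')
  finally show "x i = (cl J x + (\<Sum>j\<in>J. (\<lambda>i. x j * ee j i))) i" by (simp add: cl_def)
qed

lemma cl_mem_iff:
  fixes U :: "(nat \<Rightarrow> 'a::field) set"
  assumes U: "fv.subspace U" and J: "finite J" "\<forall>j\<in>J. ee j \<in> U"
  shows "x \<in> U \<longleftrightarrow> cl J x \<in> U"
proof -
  have s: "(\<Sum>j\<in>J. (\<lambda>i. x j * ee j i)) \<in> U"
    by (rule fv.subspace_sum[OF U]) (use J in \<open>auto intro: fv.subspace_scale[OF U]\<close>)
  have "cl J x = x - (\<Sum>j\<in>J. (\<lambda>i. x j * ee j i))"
    using cl_decomp[OF J(1), of x] by (simp add: algebra_simps)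
  then show ?thesis using cl_decomp[OF J(1), of x] s
    by (metis U fv.subspace_add fv.subspace_diff)
qed

lemma card_cl_preimage:
  fixes U' :: "(nat \<Rightarrow> 'a::{field,finite}) set"
  assumes J: "J \<subseteq> C" "finite J" and U': "U' \<subseteq> VV (C - J)"
  shows "card {x \<in> VV C. cl J x \<in> U'} = card U' * CARD('a)^card J"
proof -
  have "bij_betw (\<lambda>x. (cl J x, restrict x J)) {x \<in> VV C. cl J x \<in> U'} (U' \<times> (J \<rightarrow>\<^sub>E (UNIV::'a set)))"
  proof (rule bij_betw_byWitness[where f'="\<lambda>(y,g) i. if i \<in> J then g i else y i"])
    show "\<forall>a\<in>{x \<in> VV C. cl J x \<in> U'}. (case (cl J a, restrict a J) of (y, g) \<Rightarrow> \<lambda>i. if i \<in> J then g i else y i) = a"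
      by (auto simp: cl_def fun_eq_iff)
    show "\<forall>a'\<in>U' \<times> (J \<rightarrow>\<^sub>E UNIV). (\<lambda>x. (cl J x, restrict x J)) (case a' of (y, g) \<Rightarrow> \<lambda>i. if i \<in> J then g i else y i) = a'"
    proof
      fix a' assume a': "a' \<in> U' \<times> (J \<rightarrow>\<^sub>E (UNIV::'a set))"
      obtain y g where yg: "a' = (y,g)" "y \<in> U'" "g \<in> J \<rightarrow>\<^sub>E UNIV" using a' by auto
      have yJ: "\<forall>i\<in>J. y i = 0" using yg(2) U' by (auto simp: VV_def)
      have "cl J (\<lambda>i. if i \<in> J then g i else y i) = y" using yJ by (auto simp: cl_def fun_eq_iff)
      moreover have "restrict (\<lambda>i. if i \<in> J then g i else y i) J = g" using yg(3)
        by (auto simp: fun_eq_iff PiE_def extensional_def)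
      ultimately show "(\<lambda>x. (cl J x, restrict x J)) (case a' of (y, g) \<Rightarrow> \<lambda>i. if i \<in> J then g i else y i) = a'"
        using yg(1) by simp
    qed
    show "(\<lambda>x. (cl J x, restrict x J)) ` {x \<in> VV C. cl J x \<in> U'} \<subseteq> U' \<times> (J \<rightarrow>\<^sub>E UNIV)" by auto
    show "(\<lambda>(y, g) i. if i \<in> J then g i else y i) ` (U' \<times> (J \<rightarrow>\<^sub>E UNIV)) \<subseteq> {x \<in> VV C. cl J x \<in> U'}"
    proof clarify
      fix y and g :: "nat \<Rightarrow> 'a" assume yg: "y \<in> U'" "g \<in> J \<rightarrow>\<^sub>E UNIV"
      have yJ: "\<forall>i. i \<notin> C - J \<longrightarrow> y i = 0" using yg(1) U' by (auto simp: VV_def)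
      have "(\<lambda>i. if i \<in> J then g i else y i) \<in> VV C" using yJ J(1) by (auto simp: VV_def)
      moreover have "cl J (\<lambda>i. if i \<in> J then g i else y i) = y" using yJ by (auto simp: cl_def fun_eq_iff)
      ultimately show "(\<lambda>i. if i \<in> J then g i else y i) \<in> VV C \<and> cl J (\<lambda>i. if i \<in> J then g i else y i) \<in> U'"
        using yg(1) by simp
    qed
  qed
  hence "card {x \<in> VV C. cl J x \<in> U'} = card (U' \<times> (J \<rightarrow>\<^sub>E (UNIV::'a set)))" by (rule bij_betw_same_card)
  also have "\<dots> = card U' * CARD('a)^card J" using J(2) by (simp add: card_cartesian_product card_funcsetE)
  finally show ?thesis .
qed


lemma ee_in_VV: "j \<in> C \<Longrightarrow> ee j \<in> VV C" by (simp add: VV_def ee_def)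

lemma subspace_cl_preimage:
  assumes U': "fv.subspace (U' :: (nat \<Rightarrow> 'a::field) set)"
  shows "fv.subspace {x \<in> VV C. cl J x \<in> U'}"
proof -
  have z: "cl J 0 = (0 :: nat \<Rightarrow> 'a)" by (simp add: cl_def fun_eq_iff)
  have a: "cl J (x + y) = cl J x + cl J y" for x y :: "nat \<Rightarrow> 'a" by (simp add: cl_def fun_eq_iff)
  have s: "cl J (\<lambda>j. c * x j) = (\<lambda>j. c * cl J x j)" for c and x :: "nat \<Rightarrow> 'a" by (simp add: cl_def fun_eq_iff)
  show ?thesis using subspace_VV[of C] U' unfolding fv.subspace_def by (simp add: z a s) blast
qed

lemma count_contain:
  fixes C J :: "nat set" and e :: nat
  assumes C: "finite C" and J: "J \<subseteq> C"
  shows "real (card {U :: (nat \<Rightarrow> 'a::{field,finite}) set. fv.subspace U \<and> U \<subseteq> VV C \<and> card U = CARD('a)^e \<and> (\<forall>j\<in>J. ee j \<in> U)})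
    = qbinom (real CARD('a)) (int (card C - card J)) (int e - int (card J))"
proof -
  let ?q = "CARD('a)"
  let ?S1 = "{U :: (nat \<Rightarrow> 'a) set. fv.subspace U \<and> U \<subseteq> VV C \<and> card U = ?q^e \<and> (\<forall>j\<in>J. ee j \<in> U)}"
  let ?phi = "\<lambda>U. U \<inter> VV (C - J)"
  let ?psi = "\<lambda>U'. {x \<in> VV C. cl J x \<in> U'}"
  have finJ: "finite J" using finite_subset[OF J C] .
  have q2: "?q \<ge> 2" by (rule card_ge2)
  have clVV: "cl J x \<in> VV (C - J)" if "x \<in> VV C" for x :: "nat \<Rightarrow> 'a"
    using that by (auto simp: VV_def cl_def)
  have pp: "?psi (?phi U) = U" if U: "U \<in> ?S1" for U
  proof (rule set_eqI, rule iffI)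
    fix x assume x: "x \<in> ?psi (?phi U)"
    then have "cl J x \<in> U" by simp
    then show "x \<in> U" using cl_mem_iff[of U J x] U finJ by simp
  next
    fix x assume x: "x \<in> U"
    then have "x \<in> VV C" using U by auto
    moreover have "cl J x \<in> U" using cl_mem_iff[of U J x] U finJ x by simp
    ultimately show "x \<in> ?psi (?phi U)" using clVV by simp
  qed
  have cardU: "card U = card (?phi U) * ?q^card J" if U: "U \<in> ?S1" for U
  proof -
    have "card U = card (?psi (?phi U))" using pp[OF U] by simp
    also have "\<dots> = card (?phi U) * ?q^card J" by (rule card_cl_preimage[OF J finJ]) simp
    finally show ?thesis .
  qed
  have phi0: "card (?phi U) \<ge> 1" if U: "U \<in> ?S1" for U
  proof -
    have finU: "finite U" using U card_pos_finite[where 'a='a, of U e] by simp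
    have "0 \<in> ?phi U" using U fv.subspace_0 subspace_VV[of "C - J"] by auto
    hence "?phi U \<noteq> {}" by blast
    moreover have "finite (?phi U)" using finU by simp
    ultimately show ?thesis by (simp add: Suc_le_eq card_gt_0_iff)
  qed
  show ?thesis
  proof (cases "e < card J")
    case True
    have emp: "?S1 = {}"
    proof (rule ccontr)
      assume "?S1 \<noteq> {}"
      then obtain U where U: "U \<in> ?S1" by blast
      have "?q^card J \<le> card (?phi U) * ?q^card J" using phi0[OF U] by simp
      also have "\<dots> = ?q^e" using cardU[OF U] U by simp
      finally have "card J \<le> e" using pow_le[where 'a='a] by simp
      with True show False by simp
    qed
    show ?thesis unfolding emp using True by (simp add: qbinom_def)
  next
    case False
    define e' where "e' = e - card J"
    have ee': "e = e' + card J" using False by (simp add: e'_def)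
    let ?S2 = "{U' :: (nat \<Rightarrow> 'a) set. fv.subspace U' \<and> U' \<subseteq> VV (C - J) \<and> card U' = ?q^e'}"
    have "bij_betw ?phi ?S1 ?S2"
    proof (rule bij_betw_byWitness[where f'="?psi"])
      show "\<forall>U\<in>?S1. ?psi (?phi U) = U" using pp by blast
      show "\<forall>U'\<in>?S2. ?phi (?psi U') = U'"
      proof
        fix U' assume U': "U' \<in> ?S2"
        show "?phi (?psi U') = U'"
        proof (rule set_eqI, rule iffI)
          fix x assume "x \<in> ?phi (?psi U')"
          then have "x \<in> VV (C - J)" "cl J x \<in> U'" by auto
          moreover have "cl J x = x" using \<open>x \<in> VV (C - J)\<close> by (auto simp: VV_def cl_def fun_eq_iff)
          ultimately show "x \<in> U'" by simp
        next
          fix x assume x: "x \<in> U'"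
          then have xv: "x \<in> VV (C - J)" using U' by auto
          hence "cl J x = x" by (auto simp: VV_def cl_def fun_eq_iff)
          moreover have "x \<in> VV C" using xv by (auto simp: VV_def)
          ultimately show "x \<in> ?phi (?psi U')" using x xv by simp
        qed
      qed
      show "?phi ` ?S1 \<subseteq> ?S2"
      proof (rule image_subsetI)
        fix U assume U: "U \<in> ?S1"
        have "fv.subspace (?phi U)" using U subspace_VV by (auto intro: fv.subspace_inter)
        moreover have "card (?phi U) = ?q^e'"
        proof -
          have "card (?phi U) * ?q^card J = ?q^e' * ?q^card J" using cardU[OF U] U by (simp add: ee' power_add)
          thus ?thesis using q2 by simp
        qed
        ultimately show "?phi U \<in> ?S2" by simp
      qed
      show "?psi ` ?S2 \<subseteq> ?S1"
      proof (rule image_subsetI)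
        fix U' assume U': "U' \<in> ?S2"
        have "fv.subspace (?psi U')" using U' by (auto intro: subspace_cl_preimage)
        moreover have "card (?psi U') = ?q^e" using card_cl_preimage[OF J finJ, of U'] U' by (simp add: ee' power_add)
        moreover have "\<forall>j\<in>J. ee j \<in> ?psi U'"
        proof
          fix j assume j: "j \<in> J"
          have "cl J (ee j) = (0 :: nat \<Rightarrow> 'a)" using j by (auto simp: cl_def ee_def fun_eq_iff)
          moreover have "(0 :: nat \<Rightarrow> 'a) \<in> U'" using U' fv.subspace_0 by auto
          ultimately show "ee j \<in> ?psi U'" using j J ee_in_VV by auto
        qed
        ultimately show "?psi U' \<in> ?S1" by auto
      qed
    qed
    hence "card ?S1 = card ?S2" by (rule bij_betw_same_card)
    hence "real (card ?S1) = II (real ?q) (card (C - J)) e' / II (real ?q) e' e'"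
      using subspace_count[OF subspace_VV card_VV[of "C - J"]] C by simp
    also have "\<dots> = qbinom (real ?q) (int (card (C - J))) (int e')" by (rule qbinom_II[OF q2, symmetric])
    finally show ?thesis using finJ J by (simp add: card_Diff_subset ee')
  qed
qed

lemma card_by_fibres:
  assumes X: "finite X" and fY: "f ` X \<subseteq> Y" and Y: "finite Y"
  shows "card {x\<in>X. Q (f x)} = (\<Sum>y\<in>{y\<in>Y. Q y}. card {x\<in>X. f x = y})"
proof -
  have "{x\<in>X. Q (f x)} = (\<Union>y\<in>{y\<in>Y. Q y}. {x\<in>X. f x = y})" using fY by auto
  hence "card {x\<in>X. Q (f x)} = card (\<Union>y\<in>{y\<in>Y. Q y}. {x\<in>X. f x = y})" by simp
  also have "\<dots> = (\<Sum>y\<in>{y\<in>Y. Q y}. card {x\<in>X. f x = y})"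
    by (rule card_UN_disjoint) (use X Y in auto)
  finally show ?thesis .
qed

lemma alt_pow_sum:
  assumes "finite A"
  shows "(\<Sum>X\<in>Pow A. (-1::real)^card X) = (if A = {} then 1 else 0)"
proof -
  have "(\<Prod>x\<in>A. (1::real) - 1) = (\<Sum>X\<in>Pow A. (- 1) ^ card X * prod (\<lambda>_. 1) X * prod (\<lambda>_. 1) (A - X))"
    by (rule prod_diff_conv_sum[OF assms])
  hence e: "(\<Sum>X\<in>Pow A. (-1::real)^card X) = 0^card A" by simp
  show ?thesis
  proof (cases "A = {}")
    case False
    then have "card A > 0" using assms by (simp add: card_gt_0_iff)
    then show ?thesis using e False by simp
  qed simp
qed

lemma alt_interval_sum:
  fixes G B :: "'b set"
  assumes G: "finite G"
  shows "(\<Sum>J\<in>{J. B \<subseteq> J \<and> J \<subseteq> G}. (-1::real)^card (J - B)) = (if G = B then 1 else 0)"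
proof (cases "B \<subseteq> G")
  case True
  have bij: "bij_betw (\<lambda>K. K \<union> B) (Pow (G - B)) {J. B \<subseteq> J \<and> J \<subseteq> G}"
    by (rule bij_betw_byWitness[where f'="\<lambda>J. J - B"]) (use True in auto)
  have "(\<Sum>J\<in>{J. B \<subseteq> J \<and> J \<subseteq> G}. (-1::real)^card (J - B)) = (\<Sum>K\<in>Pow (G - B). (-1::real)^card ((K \<union> B) - B))"
    by (rule sum.reindex_bij_betw[OF bij, symmetric])
  also have "\<dots> = (\<Sum>K\<in>Pow (G - B). (-1::real)^card K)"
  proof (rule sum.cong[OF refl])
    fix K assume "K \<in> Pow (G - B)"
    hence "(K \<union> B) - B = K" by auto
    thus "(-1::real)^card ((K \<union> B) - B) = (-1)^card K" by simp
  qed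
  also have "\<dots> = (if G - B = {} then 1 else 0)" using G by (simp add: alt_pow_sum)
  finally show ?thesis using True by auto
next
  case False
  then have emp: "{J. B \<subseteq> J \<and> J \<subseteq> G} = {}" by auto
  show ?thesis unfolding emp using False by auto
qed

lemma incl_excl:
  fixes g :: "'x \<Rightarrow> 'b set"
  assumes X: "finite X" and C: "finite C" and gC: "\<forall>x\<in>X. g x \<subseteq> C" and B: "B \<subseteq> C"
  shows "real (card {x\<in>X. g x = B}) = (\<Sum>J\<in>{J. B \<subseteq> J \<and> J \<subseteq> C}. (-1)^card (J - B) * real (card {x\<in>X. J \<subseteq> g x}))"
proof -
  have finJ: "finite {J. B \<subseteq> J \<and> J \<subseteq> C}" by (rule finite_subset[of _ "Pow C"]) (use C in auto)
  have "(\<Sum>J\<in>{J. B \<subseteq> J \<and> J \<subseteq> C}. (-1)^card (J - B) * real (card {x\<in>X. J \<subseteq> g x}))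
     = (\<Sum>J\<in>{J. B \<subseteq> J \<and> J \<subseteq> C}. \<Sum>x\<in>X. if J \<subseteq> g x then (-1)^card (J - B) else (0::real))"
    using X by (simp add: sum.inter_filter[symmetric] mult.commute)
  also have "\<dots> = (\<Sum>x\<in>X. \<Sum>J\<in>{J. B \<subseteq> J \<and> J \<subseteq> C}. if J \<subseteq> g x then (-1)^card (J - B) else (0::real))"
    by (rule sum.swap)
  also have "\<dots> = (\<Sum>x\<in>X. \<Sum>J\<in>{J. B \<subseteq> J \<and> J \<subseteq> g x}. (-1::real)^card (J - B))"
  proof (rule sum.cong[OF refl])
    fix x assume x: "x \<in> X"
    have "(\<Sum>J\<in>{J. B \<subseteq> J \<and> J \<subseteq> C}. if J \<subseteq> g x then (-1)^card (J - B) else (0::real))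
       = (\<Sum>J\<in>{J\<in>{J. B \<subseteq> J \<and> J \<subseteq> C}. J \<subseteq> g x}. (-1::real)^card (J - B))"
      by (rule sum.inter_filter[OF finJ, symmetric])
    also have "{J\<in>{J. B \<subseteq> J \<and> J \<subseteq> C}. J \<subseteq> g x} = {J. B \<subseteq> J \<and> J \<subseteq> g x}" using gC x by auto
    finally show "(\<Sum>J\<in>{J. B \<subseteq> J \<and> J \<subseteq> C}. if J \<subseteq> g x then (-1)^card (J - B) else (0::real))
       = (\<Sum>J\<in>{J. B \<subseteq> J \<and> J \<subseteq> g x}. (-1::real)^card (J - B))" .
  qed
  also have "\<dots> = (\<Sum>x\<in>X. if g x = B then 1 else (0::real))"
  proof (rule sum.cong[OF refl])
    fix x assume x: "x \<in> X"
    have "finite (g x)" using gC x C by (auto intro: finite_subset)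
    then show "(\<Sum>J\<in>{J. B \<subseteq> J \<and> J \<subseteq> g x}. (-1::real)^card (J - B)) = (if g x = B then 1 else 0)"
      by (rule alt_interval_sum)
  qed
  also have "\<dots> = real (card {x\<in>X. g x = B})" using X by (simp add: sum.inter_filter[symmetric])
  finally show ?thesis by simp
qed

lemma sum_pow_card:
  fixes h :: "nat \<Rightarrow> real"
  assumes D: "finite D"
  shows "(\<Sum>K\<in>Pow D. h (card K)) = (\<Sum>j\<le>card D. real (card D choose j) * h j)"
proof -
  have "(\<Sum>K\<in>Pow D. h (card K)) = (\<Sum>j\<in>{..card D}. \<Sum>K\<in>{K. K \<in> Pow D \<and> card K = j}. h (card K))"
    by (rule sum.group[symmetric]) (use D in \<open>auto intro: card_mono\<close>)
  also have "\<dots> = (\<Sum>j\<le>card D. real (card D choose j) * h j)"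
  proof (rule sum.cong[OF refl])
    fix j
    have "{K. K \<in> Pow D \<and> card K = j} = {K. K \<subseteq> D \<and> card K = j}" by auto
    then show "(\<Sum>K\<in>{K. K \<in> Pow D \<and> card K = j}. h (card K)) = real (card D choose j) * h j"
      using n_subsets[OF D, of j] by simp
  qed
  finally show ?thesis .
qed

definition NN :: "real \<Rightarrow> nat \<Rightarrow> nat \<Rightarrow> nat \<Rightarrow> real" where
  "NN q m i e = (\<Sum>j\<le>m-i. (-1)^j * real ((m-i) choose j) * qbinom q (int (m-i-j)) (int e - int i - int j))"

definition GG :: "real \<Rightarrow> nat \<Rightarrow> nat \<Rightarrow> nat \<Rightarrow> real" where
  "GG q m n t = (\<Sum>e\<le>m. II q n e * (\<Sum>i\<in>{t..m}. real (m choose i) * NN q m i e))"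

lemma units_count:
  fixes C B :: "nat set" and e :: nat
  assumes C: "finite C" and B: "B \<subseteq> C"
  shows "real (card {U :: (nat \<Rightarrow> 'a::{field,finite}) set. (fv.subspace U \<and> U \<subseteq> VV C \<and> card U = CARD('a)^e) \<and> {j\<in>C. ee j \<in> U} = B})
     = NN (real CARD('a)) (card C) (card B) e"
proof -
  let ?q = "CARD('a)"
  let ?S = "{U :: (nat \<Rightarrow> 'a) set. fv.subspace U \<and> U \<subseteq> VV C \<and> card U = ?q^e}"
  have finV: "finite (VV C :: (nat \<Rightarrow> 'a) set)" using card_pos_finite[OF card_VV[OF C]] .
  have finS: "finite ?S" by (rule finite_subset[of _ "Pow (VV C)"]) (use finV in auto)
  have finB: "finite B" using finite_subset[OF B C] .
  have "real (card {U\<in>?S. {j\<in>C. ee j \<in> U} = B}) = (\<Sum>J\<in>{J. B \<subseteq> J \<and> J \<subseteq> C}. (-1)^card (J - B) * real (card {U\<in>?S. J \<subseteq> {j\<in>C. ee j \<in> U}}))"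
    by (rule incl_excl[OF finS C _ B]) auto
  also have "\<dots> = (\<Sum>J\<in>{J. B \<subseteq> J \<and> J \<subseteq> C}. (-1)^card (J - B) * qbinom (real ?q) (int (card C - card J)) (int e - int (card J)))"
  proof (rule sum.cong[OF refl])
    fix J assume J: "J \<in> {J. B \<subseteq> J \<and> J \<subseteq> C}"
    have "{U\<in>?S. J \<subseteq> {j\<in>C. ee j \<in> U}} = {U. fv.subspace U \<and> U \<subseteq> VV C \<and> card U = ?q^e \<and> (\<forall>j\<in>J. ee j \<in> U)}"
      using J by auto
    then show "(-1)^card (J - B) * real (card {U\<in>?S. J \<subseteq> {j\<in>C. ee j \<in> U}}) = (-1)^card (J - B) * qbinom (real ?q) (int (card C - card J)) (int e - int (card J))"
      using count_contain[OF C, of J e] J by simp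
  qed
  also have "\<dots> = (\<Sum>K\<in>Pow (C - B). (-1)^card K * qbinom (real ?q) (int (card C - card B - card K)) (int e - int (card B) - int (card K)))"
  proof -
    have bij: "bij_betw (\<lambda>K. K \<union> B) (Pow (C - B)) {J. B \<subseteq> J \<and> J \<subseteq> C}"
      by (rule bij_betw_byWitness[where f'="\<lambda>J. J - B"]) (use B in auto)
    have "(\<Sum>J\<in>{J. B \<subseteq> J \<and> J \<subseteq> C}. (-1)^card (J - B) * qbinom (real ?q) (int (card C - card J)) (int e - int (card J)))
      = (\<Sum>K\<in>Pow (C - B). (-1)^card ((K \<union> B) - B) * qbinom (real ?q) (int (card C - card (K \<union> B))) (int e - int (card (K \<union> B))))"
      by (rule sum.reindex_bij_betw[OF bij, symmetric])
    also have "\<dots> = (\<Sum>K\<in>Pow (C - B). (-1)^card K * qbinom (real ?q) (int (card C - card B - card K)) (int e - int (card B) - int (card K)))"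
    proof (rule sum.cong[OF refl])
      fix K assume K: "K \<in> Pow (C - B)"
      have fK: "finite K" using K C by (auto intro: finite_subset)
      have d: "(K \<union> B) - B = K" using K by auto
      have c: "card (K \<union> B) = card K + card B" using K fK finB by (subst card_Un_disjoint) auto
      show "(-1)^card ((K \<union> B) - B) * qbinom (real ?q) (int (card C - card (K \<union> B))) (int e - int (card (K \<union> B)))
        = (-1)^card K * qbinom (real ?q) (int (card C - card B - card K)) (int e - int (card B) - int (card K))"
        unfolding d c by (simp add: algebra_simps)
    qed
    finally show ?thesis .
  qed
  also have "\<dots> = (\<Sum>j\<le>card (C - B). real (card (C - B) choose j) * ((-1)^j * qbinom (real ?q) (int (card C - card B - j)) (int e - int (card B) - int j)))"
    by (rule sum_pow_card[where h="\<lambda>k. (-1)^k * qbinom (real ?q) (int (card C - card B - k)) (int e - int (card B) - int k)"]) (use C in auto)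
  also have "\<dots> = NN (real ?q) (card C) (card B) e"
    unfolding NN_def using card_Diff_subset[OF finB B] by (simp add: algebra_simps)
  finally show ?thesis by simp
qed


lemma units_sum:
  fixes C :: "nat set"
  assumes C: "finite C"
  shows "real (card {U :: (nat \<Rightarrow> 'a::{field,finite}) set. (fv.subspace U \<and> U \<subseteq> VV C \<and> card U = CARD('a)^e) \<and> t \<le> card {j\<in>C. ee j \<in> U}})
    = (\<Sum>i\<in>{t..card C}. real (card C choose i) * NN (real CARD('a)) (card C) i e)"
proof -
  let ?q = "CARD('a)"
  let ?S = "{U :: (nat \<Rightarrow> 'a) set. fv.subspace U \<and> U \<subseteq> VV C \<and> card U = ?q^e}"
  have finV: "finite (VV C :: (nat \<Rightarrow> 'a) set)" using card_pos_finite[OF card_VV[OF C]] .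
  have finS: "finite ?S" by (rule finite_subset[of _ "Pow (VV C)"]) (use finV in auto)
  have "card {U\<in>?S. t \<le> card {j\<in>C. ee j \<in> U}} = (\<Sum>B\<in>{B\<in>Pow C. t \<le> card B}. card {U\<in>?S. {j\<in>C. ee j \<in> U} = B})"
    by (rule card_by_fibres[OF finS]) (use C in auto)
  hence "real (card {U\<in>?S. t \<le> card {j\<in>C. ee j \<in> U}}) = (\<Sum>B\<in>{B\<in>Pow C. t \<le> card B}. real (card {U\<in>?S. {j\<in>C. ee j \<in> U} = B}))"
    by simp
  also have "\<dots> = (\<Sum>B\<in>{B\<in>Pow C. t \<le> card B}. NN (real ?q) (card C) (card B) e)"
  proof (rule sum.cong[OF refl])
    fix B assume "B \<in> {B\<in>Pow C. t \<le> card B}"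
    then have B: "B \<subseteq> C" by auto
    show "real (card {U\<in>?S. {j\<in>C. ee j \<in> U} = B}) = NN (real ?q) (card C) (card B) e"
      using units_count[OF C B, of e, where 'a='a] by simp
  qed
  also have "\<dots> = (\<Sum>B\<in>Pow C. if t \<le> card B then NN (real ?q) (card C) (card B) e else 0)"
    by (rule sum.inter_filter) (use C in simp)
  also have "\<dots> = (\<Sum>j\<le>card C. real (card C choose j) * (if t \<le> j then NN (real ?q) (card C) j e else 0))"
    by (rule sum_pow_card[OF C, where h="\<lambda>j. if t \<le> j then NN (real ?q) (card C) j e else 0"])
  also have "\<dots> = (\<Sum>j\<le>card C. if t \<le> j then real (card C choose j) * NN (real ?q) (card C) j e else 0)"
    by (rule sum.cong) auto
  also have "\<dots> = (\<Sum>j\<in>{j\<in>{..card C}. t \<le> j}. real (card C choose j) * NN (real ?q) (card C) j e)"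
    by (rule sum.inter_filter[symmetric]) simp
  also have "{j\<in>{..card C}. t \<le> j} = {t..card C}" by auto
  finally show ?thesis by simp
qed

lemma main_count:
  fixes C :: "nat set" and A :: "'b set" and t :: nat
  assumes C: "finite C" and A: "finite A"
  shows "real (card {u \<in> A \<rightarrow>\<^sub>E (VV C :: (nat \<Rightarrow> 'a::{field,finite}) set). t \<le> card {j\<in>C. ee j \<in> fv.span (u ` A)}})
    = GG (real CARD('a)) (card C) (card A) t"
proof -
  let ?q = "CARD('a)" and ?m = "card C" and ?n = "card A"
  let ?X = "A \<rightarrow>\<^sub>E (VV C :: (nat \<Rightarrow> 'a) set)"
  let ?Sp = "\<lambda>e. {U :: (nat \<Rightarrow> 'a) set. fv.subspace U \<and> U \<subseteq> VV C \<and> card U = ?q^e}"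
  let ?Y = "\<Union>e\<in>{..?m}. ?Sp e"
  let ?P = "\<lambda>U. t \<le> card {j\<in>C. ee j \<in> U}"
  have cV: "card (VV C :: (nat \<Rightarrow> 'a) set) = ?q^?m" by (rule card_VV[OF C])
  have finV: "finite (VV C :: (nat \<Rightarrow> 'a) set)" using card_pos_finite[OF cV] .
  have finX: "finite ?X" using A finV by (simp add: finite_PiE)
  have finY: "finite ?Y" by (rule finite_subset[of _ "Pow (VV C)"]) (use finV in auto)
  have fY: "(\<lambda>u. fv.span (u ` A)) ` ?X \<subseteq> ?Y"
  proof (rule image_subsetI)
    fix u assume u: "u \<in> ?X"
    have sub: "fv.span (u ` A) \<subseteq> VV C" by (rule fv.span_minimal[OF PiE_image_sub[OF u] subspace_VV])
    obtain e where e: "card (fv.span (u ` A)) = ?q^e" using span_card_pow[of "u ` A"] A by auto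
    have "?q^e \<le> ?q^?m" using card_mono[OF finV sub] e cV by simp
    hence "e \<le> ?m" using pow_le[where 'a='a] by simp
    then show "fv.span (u ` A) \<in> ?Y" using sub e by (auto simp: fv.subspace_span)
  qed
  have "card {u\<in>?X. ?P (fv.span (u ` A))} = (\<Sum>U\<in>{U\<in>?Y. ?P U}. card {u\<in>?X. fv.span (u ` A) = U})"
    by (rule card_by_fibres[OF finX fY finY])
  also have "{U\<in>?Y. ?P U} = (\<Union>e\<in>{..?m}. {U\<in>?Sp e. ?P U})" by auto
  also have "(\<Sum>U\<in>(\<Union>e\<in>{..?m}. {U\<in>?Sp e. ?P U}). card {u\<in>?X. fv.span (u ` A) = U})
      = (\<Sum>e\<in>{..?m}. \<Sum>U\<in>{U\<in>?Sp e. ?P U}. card {u\<in>?X. fv.span (u ` A) = U})"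
  proof (rule sum.UNION_disjoint)
    show "\<forall>e\<in>{..?m}. finite {U\<in>?Sp e. ?P U}"
    proof
      fix e
      show "finite {U\<in>?Sp e. ?P U}" by (rule finite_subset[of _ "Pow (VV C)"]) (use finV in auto)
    qed
    show "\<forall>e\<in>{..?m}. \<forall>e'\<in>{..?m}. e \<noteq> e' \<longrightarrow> {U\<in>?Sp e. ?P U} \<inter> {U\<in>?Sp e'. ?P U} = {}"
      using pow_inj[where 'a='a] by auto
  qed simp
  finally have "real (card {u\<in>?X. ?P (fv.span (u ` A))}) = (\<Sum>e\<in>{..?m}. \<Sum>U\<in>{U\<in>?Sp e. ?P U}. real (card {u\<in>?X. fv.span (u ` A) = U}))"
    by simp
  also have "\<dots> = (\<Sum>e\<in>{..?m}. \<Sum>U\<in>{U\<in>?Sp e. ?P U}. II (real ?q) ?n e)"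
  proof (intro sum.cong refl)
    fix e U assume U: "U \<in> {U\<in>?Sp e. ?P U}"
    have "{u\<in>?X. fv.span (u ` A) = U} = {u \<in> A \<rightarrow>\<^sub>E U. fv.span (u ` A) = U}"
    proof (rule set_eqI, rule iffI)
      fix u assume u: "u \<in> {u\<in>?X. fv.span (u ` A) = U}"
      then have "u \<in> A \<rightarrow>\<^sub>E U" by (auto simp: PiE_def Pi_def intro: fv.span_base)
      then show "u \<in> {u \<in> A \<rightarrow>\<^sub>E U. fv.span (u ` A) = U}" using u by simp
    next
      fix u assume u: "u \<in> {u \<in> A \<rightarrow>\<^sub>E U. fv.span (u ` A) = U}"
      then have "u \<in> ?X" using U by (auto simp: PiE_def Pi_def)
      then show "u \<in> {u\<in>?X. fv.span (u ` A) = U}" using u by simp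
    qed
    then show "real (card {u\<in>?X. fv.span (u ` A) = U}) = II (real ?q) ?n e"
      using spanning_count[of U e A] U A by simp
  qed
  also have "\<dots> = (\<Sum>e\<in>{..?m}. II (real ?q) ?n e * real (card {U\<in>?Sp e. ?P U}))" by (simp add: mult.commute)
  also have "\<dots> = (\<Sum>e\<in>{..?m}. II (real ?q) ?n e * (\<Sum>i\<in>{t..?m}. real (?m choose i) * NN (real ?q) ?m i e))"
  proof (intro sum.cong refl)
    fix e
    show "II (real ?q) ?n e * real (card {U\<in>?Sp e. ?P U}) = II (real ?q) ?n e * (\<Sum>i\<in>{t..?m}. real (?m choose i) * NN (real ?q) ?m i e)"
      using units_sum[OF C, of e t, where 'a='a] by simp
  qed
  finally show ?thesis unfolding GG_def by simp
qed

definition prj :: "nat set \<Rightarrow> (nat \<Rightarrow> 'a::zero) \<Rightarrow> nat \<Rightarrow> 'a" where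
  "prj C w = (\<lambda>i. if i \<in> C then w i else 0)"

lemma span_family_mem:
  fixes f :: "'b \<Rightarrow> nat \<Rightarrow> 'a::field"
  shows "(\<Sum>t\<in>T. (\<lambda>j. d t * f t j)) \<in> fv.span (f ` T)"
  by (rule fv.span_sum) (auto intro: fv.span_scale fv.span_base)

lemma span_family:
  fixes f :: "'b \<Rightarrow> nat \<Rightarrow> 'a::field"
  assumes T: "finite T" and x: "x \<in> fv.span (f ` T)"
  shows "\<exists>d. x = (\<Sum>t\<in>T. (\<lambda>j. d t * f t j))"
proof -
  define P where "P = (\<lambda>x. \<exists>d. x = (\<Sum>t\<in>T. (\<lambda>j. d t * f t j)))"
  have P0: "P 0"
  proof -
    have "(0::nat \<Rightarrow> 'a) = (\<Sum>t\<in>T. (\<lambda>j. 0 * f t j))" by (rule sym, rule sum.neutral) (simp add: fun_eq_iff)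
    thus ?thesis unfolding P_def by (rule exI[where x="\<lambda>_. 0"])
  qed
  have Padd: "P (z + w)" if Pz: "P z" and Pw: "P w" for z w
  proof -
    from Pz obtain d where dz: "z = (\<Sum>t\<in>T. (\<lambda>j. d t * f t j))" unfolding P_def by (elim exE)
    from Pw obtain d' where dw: "w = (\<Sum>t\<in>T. (\<lambda>j. d' t * f t j))" unfolding P_def by (elim exE)
    have "z + w = (\<Sum>t\<in>T. (\<lambda>j. d t * f t j) + (\<lambda>j. d' t * f t j))"
      unfolding dz dw by (rule sum.distrib[symmetric])
    also have "\<dots> = (\<Sum>t\<in>T. (\<lambda>j. (d t + d' t) * f t j))"
      by (rule sum.cong[OF refl]) (simp add: fun_eq_iff distrib_right)
    finally show ?thesis unfolding P_def by (rule exI[where x="\<lambda>t. d t + d' t"])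
  qed
  have Pscale: "P (\<lambda>j. c * z j)" if Pz: "P z" for c z
    using Pz unfolding P_def
  proof (elim exE)
    fix d assume dz: "z = (\<Sum>t\<in>T. (\<lambda>j. d t * f t j))"
    have "\<And>j. c * z j = (\<Sum>t\<in>T. (\<lambda>j. (c * d t) * f t j)) j"
      unfolding dz sum_fun_apply sum_distrib_left by (simp add: mult.assoc)
    hence "(\<lambda>j. c * z j) = (\<Sum>t\<in>T. (\<lambda>j. (c * d t) * f t j))" by (rule ext)
    thus "\<exists>d. (\<lambda>j. c * z j) = (\<Sum>t\<in>T. (\<lambda>j. d t * f t j))" by (rule exI[where x="\<lambda>t. c * d t"])
  qed
  have sub: "fv.subspace (Collect P)"
    unfolding fv.subspace_def using P0 Padd Pscale by blast
  have base: "P y" if "y \<in> f ` T" for y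
  proof -
    obtain t0 where t0: "t0 \<in> T" "y = f t0" using \<open>y \<in> f ` T\<close> by auto
    have "y = (\<Sum>t\<in>T. (\<lambda>j. (if t = t0 then 1 else 0) * f t j))"
    proof (rule ext)
      fix j
      have "(\<Sum>t\<in>T. (\<lambda>j. (if t = t0 then 1 else 0) * f t j)) j = (\<Sum>t\<in>T. if t = t0 then f t j else 0)"
        unfolding sum_fun_apply by (rule sum.cong) auto
      also have "\<dots> = f t0 j" using t0 T by (simp add: sum.delta)
      finally show "y j = (\<Sum>t\<in>T. (\<lambda>j. (if t = t0 then 1 else 0) * f t j)) j" using t0 by simp
    qed
    thus ?thesis unfolding P_def by (rule exI[where x="\<lambda>t. if t = t0 then 1 else 0"])
  qed
  have "P x" using fv.span_induct[OF x sub] base by blast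
  thus ?thesis unfolding P_def .
qed

lemma recovered_eq:
  fixes v :: "nat \<Rightarrow> nat \<Rightarrow> 'a::field"
  assumes S: "finite S"
  shows "recovered k v S = (S \<inter> {0..<k}) \<union>
     {j\<in>{0..<k} - S. ee j \<in> fv.span ((\<lambda>t. prj ({0..<k} - S) (v t)) ` ((\<lambda>p. p - k) ` (S - {0..<k})))}"
proof -
  let ?H = "S \<inter> {0..<k}" and ?C = "{0..<k} - S" and ?T = "(\<lambda>p. p - k) ` (S - {0..<k})"
  have finT: "finite ?T" using S by simp
  have injT: "inj_on (\<lambda>p. p - k) (S - {0..<k})" by (auto simp: inj_on_def)
  have split: "(\<Sum>p\<in>S. c p * coding_vec k v p j) = (if j \<in> ?H then c j else 0) + (\<Sum>t\<in>?T. c (t + k) * v t j)"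
    if j: "j < k" for c :: "nat \<Rightarrow> 'a" and j
  proof -
    have "S = ?H \<union> (S - {0..<k})" by auto
    hence "(\<Sum>p\<in>S. c p * coding_vec k v p j) = (\<Sum>p\<in>?H. c p * coding_vec k v p j) + (\<Sum>p\<in>S - {0..<k}. c p * coding_vec k v p j)"
      using S by (metis (no_types, lifting) Diff_disjoint Int_Diff_disjoint finite_Diff finite_Int sum.union_disjoint)
    also have "(\<Sum>p\<in>?H. c p * coding_vec k v p j) = (\<Sum>p\<in>?H. if j = p then c p else 0)"
      using j by (intro sum.cong refl) (auto simp: coding_vec_def unit_vec_def)
    also have "\<dots> = (if j \<in> ?H then c j else 0)" using S by (simp add: sum.delta)
    also have "(\<Sum>p\<in>S - {0..<k}. c p * coding_vec k v p j) = (\<Sum>p\<in>S - {0..<k}. c (p - k + k) * v (p - k) j)"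
      by (intro sum.cong refl) (auto simp: coding_vec_def)
    also have "\<dots> = (\<Sum>t\<in>?T. c (t + k) * v t j)"
      using sum.reindex[OF injT, of "\<lambda>t. c (t + k) * v t j"] by (simp add: o_def)
    finally show ?thesis .
  qed
  show ?thesis
  proof (rule set_eqI)
    fix i
    show "i \<in> recovered k v S \<longleftrightarrow> i \<in> ?H \<union> {j\<in>?C. ee j \<in> fv.span ((\<lambda>t. prj ?C (v t)) ` ?T)}"
    proof
      assume "i \<in> recovered k v S"
      then have ik: "i < k" and ex: "\<exists>c. \<forall>j<k. unit_vec k i j = (\<Sum>p\<in>S. c p * coding_vec k v p j)"
        by (auto simp: recovered_def in_row_space_def)
      then obtain c where c: "\<forall>j<k. unit_vec k i j = (\<Sum>p\<in>S. c p * coding_vec k v p j)" by blast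
      show "i \<in> ?H \<union> {j\<in>?C. ee j \<in> fv.span ((\<lambda>t. prj ?C (v t)) ` ?T)}"
      proof (cases "i \<in> S")
        case True
        then show ?thesis using ik by auto
      next
        case False
        have "ee i = (\<Sum>t\<in>?T. (\<lambda>j. c (t + k) * prj ?C (v t) j))"
        proof (rule ext)
          fix j
          show "ee i j = (\<Sum>t\<in>?T. (\<lambda>j. c (t + k) * prj ?C (v t) j)) j"
          proof (cases "j \<in> ?C")
            case True
            then have jk: "j < k" and jH: "j \<notin> ?H" by auto
            have u: "unit_vec k i j = ee i j" using jk by (simp add: unit_vec_def ee_def)
            have "ee i j = unit_vec k i j" by (rule u[symmetric])
            also have "\<dots> = (\<Sum>p\<in>S. c p * coding_vec k v p j)" using c jk by blast
            also have "\<dots> = (if j \<in> ?H then c j else 0) + (\<Sum>t\<in>?T. c (t + k) * v t j)" by (rule split[OF jk])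
            also have "\<dots> = (\<Sum>t\<in>?T. c (t + k) * v t j)" unfolding if_not_P[OF jH] by simp
            also have "\<dots> = (\<Sum>t\<in>?T. (\<lambda>j. c (t + k) * prj ?C (v t) j)) j" using True by (simp add: sum_fun_apply prj_def)
            finally show ?thesis .
          next
            case jC: False
            then have ji: "j \<noteq> i" using False ik by auto
            have np: "prj ?C (v t) j = 0" for t using jC unfolding prj_def by auto
            show ?thesis by (simp add: sum_fun_apply np ee_def ji)
          qed
        qed
        then have "ee i \<in> fv.span ((\<lambda>t. prj ?C (v t)) ` ?T)"
          using span_family_mem[of "\<lambda>t. c (t + k)" "\<lambda>t. prj ?C (v t)" ?T] by simp
        then show ?thesis using ik False by auto
      qed
    next
      assume i: "i \<in> ?H \<union> {j\<in>?C. ee j \<in> fv.span ((\<lambda>t. prj ?C (v t)) ` ?T)}"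
      show "i \<in> recovered k v S"
      proof (cases "i \<in> ?H")
        case True
        let ?c = "\<lambda>p. if p = i then (1::'a) else 0"
        have "\<forall>j<k. unit_vec k i j = (\<Sum>p\<in>S. ?c p * coding_vec k v p j)"
        proof (intro allI impI)
          fix j assume j: "j < k"
          have z: "(\<Sum>t\<in>?T. ?c (t + k) * v t j) = 0" using True by (intro sum.neutral) auto
          have u: "unit_vec k i j = (if j = i then 1 else 0)" using j by (simp add: unit_vec_def)
          have "(\<Sum>p\<in>S. ?c p * coding_vec k v p j) = (if j \<in> ?H then ?c j else 0)"
            unfolding split[OF j, of ?c] z by simp
          also have "\<dots> = (if j = i then 1 else 0)" using True by auto
          finally show "unit_vec k i j = (\<Sum>p\<in>S. ?c p * coding_vec k v p j)" using u by simp
        qed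
        then have "in_row_space k (coding_vec k v) S (unit_vec k i)" unfolding in_row_space_def by (rule exI[of _ ?c])
        then show ?thesis using True by (simp add: recovered_def)
      next
        case False
        then have iC: "i \<in> ?C" and sp: "ee i \<in> fv.span ((\<lambda>t. prj ?C (v t)) ` ?T)" using i by auto
        obtain d where d: "ee i = (\<Sum>t\<in>?T. (\<lambda>j. d t * prj ?C (v t) j))"
          using span_family[OF finT sp] by blast
        let ?c = "\<lambda>p. if p < k then - (\<Sum>t\<in>?T. d t * v t p) else d (p - k)"
        have "\<forall>j<k. unit_vec k i j = (\<Sum>p\<in>S. ?c p * coding_vec k v p j)"
        proof (intro allI impI)
          fix j assume j: "j < k"
          have e1: "(\<Sum>t\<in>?T. ?c (t + k) * v t j) = (\<Sum>t\<in>?T. d t * v t j)" by simp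
          have dj: "ee i j = (\<Sum>t\<in>?T. d t * prj ?C (v t) j)" using d by (simp add: sum_fun_apply)
          have u: "unit_vec k i j = (if j = i then 1 else 0)" using j by (simp add: unit_vec_def)
          have sp2: "(\<Sum>p\<in>S. ?c p * coding_vec k v p j) = (if j \<in> ?H then ?c j else 0) + (\<Sum>t\<in>?T. d t * v t j)"
            unfolding split[OF j, of ?c] e1 ..
          show "unit_vec k i j = (\<Sum>p\<in>S. ?c p * coding_vec k v p j)"
          proof (cases "j \<in> ?H")
            case True
            then have ji: "j \<noteq> i" using iC by auto
            have "?c j = - (\<Sum>t\<in>?T. d t * v t j)" using j by simp
            then show ?thesis unfolding sp2 u using True ji by simp
          next
            case jH: False
            then have "j \<in> ?C" using j by auto
            then have "(\<Sum>t\<in>?T. d t * v t j) = ee i j" using dj by (simp add: prj_def)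
            then show ?thesis unfolding sp2 u using jH iC by (simp add: ee_def)
          qed
        qed
        then have "in_row_space k (coding_vec k v) S (unit_vec k i)" unfolding in_row_space_def by (rule exI[of _ ?c])
        then show ?thesis using iC by (simp add: recovered_def)
      qed
    qed
  qed
qed

lemma prod_if_const:
  assumes "finite A"
  shows "(\<Prod>i\<in>A. if i \<in> B then (a::nat) else b) = a^card (A \<inter> B) * b^card (A - B)"
proof -
  have "(\<Prod>i\<in>A. if i \<in> B then a else b) = (\<Prod>i\<in>A \<inter> {x. x \<in> B}. a) * (\<Prod>i\<in>A \<inter> - {x. x \<in> B}. b)"
    by (rule prod.If_cases[OF assms])
  also have "A \<inter> {x. x \<in> B} = A \<inter> B" by auto
  also have "A \<inter> - {x. x \<in> B} = A - B" by auto
  finally show ?thesis by simp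
qed

lemma fibre_card_prj:
  fixes z :: "nat \<Rightarrow> 'a::{field,finite}"
  assumes CK: "C \<subseteq> K" and K: "finite K" and z: "z \<in> VV C"
  shows "card {w \<in> K \<rightarrow>\<^sub>E (UNIV::'a set). prj C w = z} = CARD('a)^(card K - card C)"
proof -
  have "{w \<in> K \<rightarrow>\<^sub>E (UNIV::'a set). prj C w = z} = PiE K (\<lambda>i. if i \<in> C then {z i} else UNIV)"
  proof (rule set_eqI, rule iffI)
    fix w assume "w \<in> {w \<in> K \<rightarrow>\<^sub>E (UNIV::'a set). prj C w = z}"
    then have w: "w \<in> K \<rightarrow>\<^sub>E UNIV" "prj C w = z" by auto
    have "w i = z i" if "i \<in> C" for i
    proof -
      have "prj C w i = z i" using w(2) by simp
      thus ?thesis using that by (simp add: prj_def)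
    qed
    then show "w \<in> PiE K (\<lambda>i. if i \<in> C then {z i} else UNIV)" using w(1) by (auto simp: PiE_def Pi_def)
  next
    fix w assume w: "w \<in> PiE K (\<lambda>i. if i \<in> C then {z i} else UNIV)"
    have "w \<in> K \<rightarrow>\<^sub>E UNIV" using w by (auto simp: PiE_def Pi_def)
    moreover have "prj C w = z"
    proof (rule ext)
      fix i show "prj C w i = z i"
      proof (cases "i \<in> C")
        case True
        then have "i \<in> K" using CK by auto
        then show ?thesis using w True by (auto simp: prj_def PiE_def Pi_def)
      next
        case False
        then show ?thesis using z by (simp add: prj_def VV_def)
      qed
    qed
    ultimately show "w \<in> {w \<in> K \<rightarrow>\<^sub>E (UNIV::'a set). prj C w = z}" by simp
  qed
  hence "card {w \<in> K \<rightarrow>\<^sub>E (UNIV::'a set). prj C w = z} = (\<Prod>i\<in>K. card (if i \<in> C then {z i} else (UNIV::'a set)))"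
    using K by (simp add: card_PiE)
  also have "\<dots> = (\<Prod>i\<in>K. if i \<in> C then 1 else CARD('a))" by (rule prod.cong) auto
  also have "\<dots> = CARD('a)^(card K - card C)"
    using prod_if_const[OF K, of C 1 "CARD('a)"] CK K by (simp add: card_Diff_subset Int_absorb1 finite_subset)
  finally show ?thesis .
qed

lemma count_S:
  fixes k nT n x :: nat and S :: "nat set"
  assumes S: "S \<subseteq> {0..<nT}" "card S = n" and knT: "k \<le> nT"
  shows "real (card {v \<in> {0..<nT-k} \<rightarrow>\<^sub>E ({0..<k} \<rightarrow>\<^sub>E (UNIV::'a::{field,finite} set)). x \<le> card (recovered k v S)})
    = real CARD('a)^(card (S \<inter> {0..<k}) * (n - card (S \<inter> {0..<k}))) * real CARD('a)^(k * (nT - k - (n - card (S \<inter> {0..<k}))))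
      * GG (real CARD('a)) (k - card (S \<inter> {0..<k})) (n - card (S \<inter> {0..<k})) (x - card (S \<inter> {0..<k}))"
proof -
  let ?q = "CARD('a)"
  define h where "h = card (S \<inter> {0..<k})"
  define K where "K = {0..<k}"
  define C where "C = K - S"
  define T where "T = (\<lambda>p. p - k) ` (S - K)"
  define N where "N = {0..<nT-k}"
  define F where "F = K \<rightarrow>\<^sub>E (UNIV::'a set)"
  let ?PV = "N \<rightarrow>\<^sub>E F"
  let ?Y = "T \<rightarrow>\<^sub>E (VV C :: (nat \<Rightarrow> 'a) set)"
  have finS: "finite S" using S(1) finite_subset by blast
  have finK: "finite K" by (simp add: K_def)
  have finN: "finite N" by (simp add: N_def)
  have cK: "card K = k" by (simp add: K_def)
  have hH: "card (S \<inter> K) = h" by (simp add: h_def K_def)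
  have hk: "h \<le> k" using card_mono[OF finK, of "S \<inter> K"] hH cK by auto
  have hn: "h \<le> n" using card_mono[OF finS, of "S \<inter> K"] hH S(2) by auto
  have cSK: "card (S - K) = n - h" using card_Diff_subset_Int[OF finite_Int[OF disjI1[OF finS]]] S(2) hH
    by (metis Diff_Int2 Int_lower1 card_Diff_subset finS finite_Int inf.idem)
  have injT: "inj_on (\<lambda>p. p - k) (S - K)" by (auto simp: inj_on_def K_def)
  have cT: "card T = n - h" unfolding T_def using card_image[OF injT] cSK by simp
  have finT: "finite T" unfolding T_def using finS by simp
  have TN: "T \<subseteq> N" using S(1) by (auto simp: T_def N_def K_def)
  have cC: "card C = k - h"
  proof -
    have "C = K - (S \<inter> K)" by (auto simp: C_def)
    thus ?thesis using card_Diff_subset[of "S \<inter> K" K] finK hH cK by (simp add: finite_subset)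
  qed
  have finC: "finite C" by (simp add: C_def finK)
  have CK: "C \<subseteq> K" by (auto simp: C_def)
  have cF: "card F = ?q^k" using finK cK by (simp add: F_def card_funcsetE)
  define \<Phi> where "\<Phi> = (\<lambda>v::nat \<Rightarrow> nat \<Rightarrow> 'a. restrict (\<lambda>t. prj C (v t)) T)"
  define Q where "Q = (\<lambda>y::nat \<Rightarrow> nat \<Rightarrow> 'a. x - h \<le> card {j\<in>C. ee j \<in> fv.span (y ` T)})"
  have rec: "x \<le> card (recovered k v S) \<longleftrightarrow> Q (\<Phi> v)" for v :: "nat \<Rightarrow> nat \<Rightarrow> 'a"
  proof -
    have r: "recovered k v S = (S \<inter> K) \<union> {j\<in>C. ee j \<in> fv.span ((\<lambda>t. prj C (v t)) ` T)}"
      unfolding recovered_eq[OF finS] C_def T_def K_def ..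
    have img: "\<Phi> v ` T = (\<lambda>t. prj C (v t)) ` T" by (auto simp: \<Phi>_def)
    have "card (recovered k v S) = h + card {j\<in>C. ee j \<in> fv.span ((\<lambda>t. prj C (v t)) ` T)}"
      unfolding r hH[symmetric] by (rule card_Un_disjoint) (use finS finC in \<open>auto simp: C_def\<close>)
    then show ?thesis unfolding Q_def img by auto
  qed
  have setEq: "{v \<in> ?PV. x \<le> card (recovered k v S)} = {v \<in> ?PV. Q (\<Phi> v)}" using rec by auto
  have finPV: "finite ?PV" using finN finK by (simp add: F_def finite_PiE)
  have finVC: "finite (VV C :: (nat \<Rightarrow> 'a) set)" using card_pos_finite[OF card_VV[OF finC]] .
  have finY: "finite ?Y" using finT finVC by (simp add: finite_PiE)
  have PhiY: "\<Phi> ` ?PV \<subseteq> ?Y" by (auto simp: \<Phi>_def prj_def VV_def)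
  have fib: "card {v \<in> ?PV. \<Phi> v = y} = ?q^(h * (n - h)) * ?q^(k * (nT - k - (n - h)))" if y: "y \<in> ?Y" for y
  proof -
    have "{v \<in> ?PV. \<Phi> v = y} = PiE N (\<lambda>t. if t \<in> T then {w \<in> F. prj C w = y t} else F)"
    proof (rule set_eqI, rule iffI)
      fix v assume "v \<in> {v \<in> ?PV. \<Phi> v = y}"
      then have v: "v \<in> ?PV" "\<Phi> v = y" by auto
      have "prj C (v t) = y t" if "t \<in> T" for t
      proof -
        have "\<Phi> v t = y t" using v(2) by simp
        thus ?thesis using that by (simp add: \<Phi>_def)
      qed
      then show "v \<in> PiE N (\<lambda>t. if t \<in> T then {w \<in> F. prj C w = y t} else F)"
        using v(1) by (auto simp: PiE_def Pi_def)
    next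
      fix v assume v: "v \<in> PiE N (\<lambda>t. if t \<in> T then {w \<in> F. prj C w = y t} else F)"
      have "v \<in> ?PV" using v by (auto simp: PiE_def Pi_def split: if_splits)
      moreover have "\<Phi> v = y"
      proof (rule ext)
        fix t show "\<Phi> v t = y t"
        proof (cases "t \<in> T")
          case True
          then have "t \<in> N" using TN by auto
          then show ?thesis using v True by (auto simp: \<Phi>_def PiE_def Pi_def)
        next
          case False
          then show ?thesis using y by (auto simp: \<Phi>_def PiE_def extensional_def)
        qed
      qed
      ultimately show "v \<in> {v \<in> ?PV. \<Phi> v = y}" by simp
    qed
    hence "card {v \<in> ?PV. \<Phi> v = y} = (\<Prod>t\<in>N. card (if t \<in> T then {w \<in> F. prj C w = y t} else F))"
      using finN by (simp add: card_PiE)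
    also have "\<dots> = (\<Prod>t\<in>N. if t \<in> T then ?q^h else ?q^k)"
    proof (rule prod.cong[OF refl])
      fix t assume "t \<in> N"
      show "card (if t \<in> T then {w \<in> F. prj C w = y t} else F) = (if t \<in> T then ?q^h else ?q^k)"
      proof (cases "t \<in> T")
        case True
        then have "y t \<in> VV C" using y by auto
        then have "card {w \<in> F. prj C w = y t} = ?q^(card K - card C)"
          unfolding F_def by (rule fibre_card_prj[OF CK finK])
        also have "card K - card C = h" using cK cC hk by simp
        finally show ?thesis using True by simp
      next
        case False
        then show ?thesis using cF by simp
      qed
    qed
    also have "\<dots> = (?q^h)^card (N \<inter> T) * (?q^k)^card (N - T)" by (rule prod_if_const[OF finN])
    also have "N \<inter> T = T" using TN by auto
    also have "card (N - T) = nT - k - (n - h)" using card_Diff_subset[OF finT TN] cT by (simp add: N_def)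
    finally show ?thesis using cT by (simp add: power_mult)
  qed
  have "card {v \<in> ?PV. Q (\<Phi> v)} = (\<Sum>y\<in>{y\<in>?Y. Q y}. card {v \<in> ?PV. \<Phi> v = y})"
    by (rule card_by_fibres[OF finPV PhiY finY])
  also have "\<dots> = (\<Sum>y\<in>{y\<in>?Y. Q y}. ?q^(h * (n - h)) * ?q^(k * (nT - k - (n - h))))"
    by (rule sum.cong) (auto simp: fib)
  also have "\<dots> = card {y\<in>?Y. Q y} * (?q^(h * (n - h)) * ?q^(k * (nT - k - (n - h))))" by simp
  finally have c1: "card {v \<in> ?PV. Q (\<Phi> v)} = card {y\<in>?Y. Q y} * (?q^(h * (n - h)) * ?q^(k * (nT - k - (n - h))))" .
  have c2: "real (card {y\<in>?Y. Q y}) = GG (real ?q) (k - h) (n - h) (x - h)"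
    using main_count[OF finC finT, of "x - h", where 'a='a] cC cT unfolding Q_def by simp
  have "real (card {v \<in> ?PV. x \<le> card (recovered k v S)}) = real (?q^(h * (n - h))) * real (?q^(k * (nT - k - (n - h)))) * GG (real ?q) (k - h) (n - h) (x - h)"
    unfolding setEq c1 using c2 by simp
  then show ?thesis unfolding h_def N_def F_def K_def by simp
qed

lemma subsets_count:
  assumes U: "finite U" and KU: "K \<subseteq> U" and hn: "h \<le> n"
  shows "card {S. S \<subseteq> U \<and> card S = n \<and> card (S \<inter> K) = h} = (card K choose h) * (card U - card K choose (n - h))"
proof -
  have finK: "finite K" using finite_subset[OF KU U] .
  let ?A = "{A. A \<subseteq> K \<and> card A = h}" and ?B = "{B. B \<subseteq> U - K \<and> card B = n - h}"
  have "bij_betw (\<lambda>S. (S \<inter> K, S - K)) {S. S \<subseteq> U \<and> card S = n \<and> card (S \<inter> K) = h} (?A \<times> ?B)"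
  proof (rule bij_betw_byWitness[where f'="\<lambda>(A,B). A \<union> B"])
    show "\<forall>S\<in>{S. S \<subseteq> U \<and> card S = n \<and> card (S \<inter> K) = h}. (case (S \<inter> K, S - K) of (A, B) \<Rightarrow> A \<union> B) = S"
      by auto
    show "\<forall>p\<in>?A \<times> ?B. (\<lambda>S. (S \<inter> K, S - K)) (case p of (A, B) \<Rightarrow> A \<union> B) = p" by auto
    show "(\<lambda>S. (S \<inter> K, S - K)) ` {S. S \<subseteq> U \<and> card S = n \<and> card (S \<inter> K) = h} \<subseteq> ?A \<times> ?B"
    proof (rule image_subsetI)
      fix S assume S: "S \<in> {S. S \<subseteq> U \<and> card S = n \<and> card (S \<inter> K) = h}"
      have fS: "finite S" using S U by (auto intro: finite_subset)
      have "card (S - K) = n - h" using S card_Diff_subset_Int[of S K] fS by simp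
      then show "(S \<inter> K, S - K) \<in> ?A \<times> ?B" using S by auto
    qed
    show "(\<lambda>(A,B). A \<union> B) ` (?A \<times> ?B) \<subseteq> {S. S \<subseteq> U \<and> card S = n \<and> card (S \<inter> K) = h}"
    proof (rule image_subsetI)
      fix p assume "p \<in> ?A \<times> ?B"
      then obtain A B where p: "p = (A, B)" and A: "A \<subseteq> K" "card A = h" and B: "B \<subseteq> U - K" "card B = n - h"
        by auto
      have fA: "finite A" using A finK by (auto intro: finite_subset)
      have fB: "finite B" using B U by (auto intro: finite_subset)
      have "card (A \<union> B) = n" using card_Un_disjoint[OF fA fB] A B hn by auto
      moreover have "(A \<union> B) \<inter> K = A" using A B by auto
      ultimately show "(\<lambda>(A,B). A \<union> B) p \<in> {S. S \<subseteq> U \<and> card S = n \<and> card (S \<inter> K) = h}"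
        using A B KU p by auto
    qed
  qed
  hence "card {S. S \<subseteq> U \<and> card S = n \<and> card (S \<inter> K) = h} = card (?A \<times> ?B)" by (rule bij_betw_same_card)
  also have "\<dots> = (card K choose h) * (card (U - K) choose (n - h))"
    using finK U by (simp add: card_cartesian_product n_subsets)
  finally show ?thesis using card_Diff_subset[OF finK KU] by simp
qed

definition val :: "real \<Rightarrow> nat \<Rightarrow> nat \<Rightarrow> nat \<Rightarrow> nat \<Rightarrow> nat \<Rightarrow> real" where
  "val q k nT n x h = q^(h * (n - h)) * q^(k * (nT - k - (n - h))) * GG q (k - h) (n - h) (x - h)"

lemma prob_formula:
  fixes k nT n x :: nat
  assumes knT: "k \<le> nT" and nnT: "n \<le> nT"
  shows "measure_pmf.prob
      (pmf_of_set (({0..<nT - k} \<rightarrow>\<^sub>E ({0..<k} \<rightarrow>\<^sub>E (UNIV :: ('a::{field,finite}) set))) \<times> {S. S \<subseteq> {0..<nT} \<and> card S = n}))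
      {(v, S). x \<le> card (recovered k v S)}
    = (\<Sum>h\<in>{..min n k}. real (k choose h) * real ((nT - k) choose (n - h)) * val (real CARD('a)) k nT n x h)
      / (real CARD('a)^(k * (nT - k)) * real (nT choose n))"
proof -
  let ?q = "CARD('a)"
  let ?PV = "{0..<nT - k} \<rightarrow>\<^sub>E ({0..<k} \<rightarrow>\<^sub>E (UNIV :: 'a set))"
  let ?SS = "{S. S \<subseteq> {0..<nT} \<and> card S = n}"
  let ?cnt = "\<lambda>S. card {v \<in> ?PV. x \<le> card (recovered k v S)}"
  have finPV: "finite ?PV" by (simp add: finite_PiE)
  have finSS: "finite ?SS" by (rule finite_subset[of _ "Pow {0..<nT}"]) auto
  have cPV: "card ?PV = ?q^(k * (nT - k))" by (simp add: card_funcsetE power_mult)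
  have cSS: "card ?SS = nT choose n" using n_subsets[of "{0..<nT}" n] by simp
  have neSS: "?SS \<noteq> {}" using nnT by (auto intro!: exI[of _ "{0..<n}"])
  have nePV: "?PV \<noteq> {}" by (simp add: PiE_eq_empty_iff)
  have P: "measure_pmf.prob (pmf_of_set (?PV \<times> ?SS)) {(v, S). x \<le> card (recovered k v S)}
      = real (card ((?PV \<times> ?SS) \<inter> {(v, S). x \<le> card (recovered k v S)})) / real (card (?PV \<times> ?SS))"
    by (rule measure_pmf_of_set) (use neSS nePV finPV finSS in auto)
  have E1: "(?PV \<times> ?SS) \<inter> {(v, S). x \<le> card (recovered k v S)} = {p \<in> ?PV \<times> ?SS. x \<le> card (recovered k (fst p) (snd p))}"
    by auto
  have c1: "card {p \<in> ?PV \<times> ?SS. x \<le> card (recovered k (fst p) (snd p))} = (\<Sum>S\<in>?SS. ?cnt S)"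
    by (rule card_pairs_sum[OF finSS finPV])
  have c2: "card (?PV \<times> ?SS) = ?q^(k * (nT - k)) * (nT choose n)" by (simp add: card_cartesian_product cPV cSS)
  have "(\<Sum>S\<in>?SS. ?cnt S) = (\<Sum>h\<in>{..k}. \<Sum>S\<in>{S \<in> ?SS. card (S \<inter> {0..<k}) = h}. ?cnt S)"
  proof (rule sum.group[symmetric, OF finSS])
    show "(\<lambda>S. card (S \<inter> {0..<k})) ` ?SS \<subseteq> {..k}"
    proof (rule image_subsetI)
      fix S assume "S \<in> ?SS"
      have "card (S \<inter> {0..<k}) \<le> card {0..<k}" by (rule card_mono) auto
      thus "card (S \<inter> {0..<k}) \<in> {..k}" by simp
    qed
  qed simp
  hence "real (\<Sum>S\<in>?SS. ?cnt S) = real (\<Sum>h\<in>{..k}. \<Sum>S\<in>{S \<in> ?SS. card (S \<inter> {0..<k}) = h}. ?cnt S)" by simp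
  also have "\<dots> = (\<Sum>h\<in>{..k}. \<Sum>S\<in>{S \<in> ?SS. card (S \<inter> {0..<k}) = h}. val (real ?q) k nT n x h)"
    unfolding of_nat_sum
  proof (intro sum.cong refl)
    fix h S assume "S \<in> {S \<in> ?SS. card (S \<inter> {0..<k}) = h}"
    then have S: "S \<subseteq> {0..<nT}" "card S = n" "card (S \<inter> {0..<k}) = h" by auto
    show "real (?cnt S) = val (real ?q) k nT n x h"
      using count_S[OF S(1,2) knT, of x, where 'a='a] S(3) by (simp add: val_def)
  qed
  also have "\<dots> = (\<Sum>h\<in>{..k}. real (card {S \<in> ?SS. card (S \<inter> {0..<k}) = h}) * val (real ?q) k nT n x h)" by simp
  also have "\<dots> = (\<Sum>h\<in>{..k}. if h \<le> n then real (k choose h) * real ((nT - k) choose (n - h)) * val (real ?q) k nT n x h else 0)"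
  proof (intro sum.cong refl)
    fix h assume h: "h \<in> {..k}"
    show "real (card {S \<in> ?SS. card (S \<inter> {0..<k}) = h}) * val (real ?q) k nT n x h
        = (if h \<le> n then real (k choose h) * real ((nT - k) choose (n - h)) * val (real ?q) k nT n x h else 0)"
    proof (cases "h \<le> n")
      case True
      have "{S \<in> ?SS. card (S \<inter> {0..<k}) = h} = {S. S \<subseteq> {0..<nT} \<and> card S = n \<and> card (S \<inter> {0..<k}) = h}" by auto
      then show ?thesis using subsets_count[of "{0..<nT}" "{0..<k}" h n] True knT by simp
    next
      case False
      have "{S \<in> ?SS. card (S \<inter> {0..<k}) = h} = {}"
      proof (rule ccontr)
        assume "{S \<in> ?SS. card (S \<inter> {0..<k}) = h} \<noteq> {}"
        then obtain S where S: "S \<subseteq> {0..<nT}" "card S = n" "card (S \<inter> {0..<k}) = h" by auto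
        have "card (S \<inter> {0..<k}) \<le> card S" using S(1) by (intro card_mono) (auto intro: finite_subset)
        then show False using S False by simp
      qed
      then show ?thesis using False by simp
    qed
  qed
  also have "\<dots> = (\<Sum>h\<in>{h\<in>{..k}. h \<le> n}. real (k choose h) * real ((nT - k) choose (n - h)) * val (real ?q) k nT n x h)"
    by (rule sum.inter_filter[symmetric]) simp
  also have "{h\<in>{..k}. h \<le> n} = {..min n k}" by auto
  finally have c3: "real (\<Sum>S\<in>?SS. ?cnt S) = (\<Sum>h\<in>{..min n k}. real (k choose h) * real ((nT - k) choose (n - h)) * val (real ?q) k nT n x h)" .
  show ?thesis unfolding P E1 c1 c2 c3 by simp
qed

definition Tm :: "real \<Rightarrow> nat \<Rightarrow> nat \<Rightarrow> nat \<Rightarrow> nat \<Rightarrow> int \<Rightarrow> int \<Rightarrow> real" where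
 "Tm q k nT n x r h = binom_int (int k) h * binom_int (int nT - int k) (int n - h)
          * q powi (- ((int n - h) * (int k - h)))
          * (\<Prod>l\<in>{0..<r - h}. q powi (int n - h) - q powi l)
          * (\<Sum>i\<in>{max 0 (int x - h)..r - h}.
               binom_int (int k - h) i *
               (\<Sum>j\<in>{0..int k - h - i}.
                  (-1) powi j * binom_int (int k - h - i) j
                  * qbinom q (int k - h - i - j) (r - h - i - j)))"

lemma binom_int_nat: "binom_int (int a) (int b) = real (a choose b)"
  by (simp add: binom_int_def binomial_eq_0)

lemma NN_zero: "e < i \<Longrightarrow> NN q m i e = 0"
  unfolding NN_def by (rule sum.neutral) (auto simp: qbinom_def)

lemma inner_j:
  assumes "i \<le> m"
  shows "(\<Sum>j\<in>{0..int m - int i}. (-1) powi j * binom_int (int m - int i) j * qbinom q (int m - int i - j) (int e - int i - j))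
       = NN q m i e"
proof -
  have mi: "int m - int i = int (m - i)" using assms by simp
  have "(\<Sum>j\<in>{0..int m - int i}. (-1) powi j * binom_int (int m - int i) j * qbinom q (int m - int i - j) (int e - int i - j))
      = (\<Sum>j\<in>{int 0..int (m - i)}. (-1) powi j * binom_int (int (m - i)) j * qbinom q (int (m - i) - j) (int e - int i - j))"
    unfolding mi by simp
  also have "\<dots> = (\<Sum>j\<in>{0..m - i}. (-1) powi (int j) * binom_int (int (m - i)) (int j) * qbinom q (int (m - i) - int j) (int e - int i - int j))"
    by (simp only: sum.atLeast_int_atMost_int_shift o_def)
  also have "\<dots> = (\<Sum>j\<in>{0..m - i}. (-1)^j * real ((m - i) choose j) * qbinom q (int (m - i - j)) (int e - int i - int j))"
  proof (intro sum.cong refl)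
    fix j assume "j \<in> {0..m - i}"
    then have jj: "int (m - i) - int j = int (m - i - j)" by simp
    show "(-1) powi (int j) * binom_int (int (m - i)) (int j) * qbinom q (int (m - i) - int j) (int e - int i - int j)
        = (-1)^j * real ((m - i) choose j) * qbinom q (int (m - i - j)) (int e - int i - int j)"
      unfolding jj by (simp add: binom_int_nat power_int_of_nat)
  qed
  also have "\<dots> = NN q m i e" unfolding NN_def by (simp add: atLeast0AtMost)
  finally show ?thesis .
qed

lemma Tm_nat:
  assumes hr: "h \<le> r" and rn: "r \<le> n" and rk: "r \<le> k" and knT: "k \<le> nT"
  shows "Tm q k nT n x (int r) (int h) = real (k choose h) * real ((nT - k) choose (n - h))
      * q powi (- ((int n - int h) * (int k - int h))) * II q (n - h) (r - h)
      * (\<Sum>i\<in>{x - h..r - h}. real ((k - h) choose i) * NN q (k - h) i (r - h))"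
proof -
  have b2: "binom_int (int nT - int k) (int n - int h) = real ((nT - k) choose (n - h))"
    using knT hr rn binom_int_nat[of "nT - k" "n - h"] by (simp add: of_nat_diff)
  have rh: "int r - int h = int (r - h)" using hr by simp
  have pr: "(\<Prod>l\<in>{0..<int r - int h}. q powi (int n - int h) - q powi l) = II q (n - h) (r - h)"
  proof -
    have "(\<Prod>l\<in>{0..<int r - int h}. q powi (int n - int h) - q powi l) = (\<Prod>l\<in>{int 0..<int (r - h)}. q powi int (n - h) - q powi l)"
      unfolding rh using hr rn by (simp add: of_nat_diff)
    also have "\<dots> = (\<Prod>l\<in>{0..<r - h}. q powi int (n - h) - q powi int l)"
      by (simp only: prod.atLeast_int_lessThan_int_shift o_def)
    also have "\<dots> = II q (n - h) (r - h)" by (simp add: II_def power_int_of_nat atLeast0LessThan)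
    finally show ?thesis .
  qed
  have xh: "max 0 (int x - int h) = int (x - h)" by simp
  have si: "(\<Sum>i\<in>{max 0 (int x - int h)..int r - int h}. binom_int (int k - int h) i *
               (\<Sum>j\<in>{0..int k - int h - i}. (-1) powi j * binom_int (int k - int h - i) j
                  * qbinom q (int k - int h - i - j) (int r - int h - i - j)))
      = (\<Sum>i\<in>{x - h..r - h}. real ((k - h) choose i) * NN q (k - h) i (r - h))"
  proof -
    have "(\<Sum>i\<in>{max 0 (int x - int h)..int r - int h}. binom_int (int k - int h) i *
               (\<Sum>j\<in>{0..int k - int h - i}. (-1) powi j * binom_int (int k - int h - i) j
                  * qbinom q (int k - int h - i - j) (int r - int h - i - j)))
       = (\<Sum>i\<in>{int (x - h)..int (r - h)}. binom_int (int (k - h)) i *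
               (\<Sum>j\<in>{0..int (k - h) - i}. (-1) powi j * binom_int (int (k - h) - i) j
                  * qbinom q (int (k - h) - i - j) (int (r - h) - i - j)))"
      unfolding xh rh using hr rk by (simp add: of_nat_diff)
    also have "\<dots> = (\<Sum>i\<in>{x - h..r - h}. binom_int (int (k - h)) (int i) *
               (\<Sum>j\<in>{0..int (k - h) - int i}. (-1) powi j * binom_int (int (k - h) - int i) j
                  * qbinom q (int (k - h) - int i - j) (int (r - h) - int i - j)))"
      by (simp only: sum.atLeast_int_atMost_int_shift o_def)
    also have "\<dots> = (\<Sum>i\<in>{x - h..r - h}. real ((k - h) choose i) * NN q (k - h) i (r - h))"
    proof (intro sum.cong refl)
      fix i assume "i \<in> {x - h..r - h}"
      then have ik: "i \<le> k - h" using rk by auto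
      show "binom_int (int (k - h)) (int i) *
               (\<Sum>j\<in>{0..int (k - h) - int i}. (-1) powi j * binom_int (int (k - h) - int i) j
                  * qbinom q (int (k - h) - int i - j) (int (r - h) - int i - j))
          = real ((k - h) choose i) * NN q (k - h) i (r - h)"
        using inner_j[OF ik, of q "r - h"] by (simp add: binom_int_nat)
    qed
    finally show ?thesis .
  qed
  show ?thesis unfolding Tm_def b2 pr si by (simp add: binom_int_nat)
qed


lemma inner_sum_h:
  assumes hM: "h \<le> min n k"
  shows "(\<Sum>r\<in>{r\<in>{x..min n k}. h \<le> r}. II q (n - h) (r - h) * (\<Sum>i\<in>{x - h..r - h}. real ((k - h) choose i) * NN q (k - h) i (r - h)))
       = GG q (k - h) (n - h) (x - h)"
proof -
  let ?M = "min n k"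
  let ?S1 = "\<lambda>e. (\<Sum>i\<in>{x - h..e}. real ((k - h) choose i) * NN q (k - h) i e)"
  let ?S2 = "\<lambda>e. (\<Sum>i\<in>{x - h..k - h}. real ((k - h) choose i) * NN q (k - h) i e)"
  have bij: "bij_betw (\<lambda>e. e + h) {x - h..?M - h} {r\<in>{x..?M}. h \<le> r}"
    by (rule bij_betw_byWitness[where f'="\<lambda>r. r - h"]) (use hM in auto)
  have "(\<Sum>r\<in>{r\<in>{x..?M}. h \<le> r}. II q (n - h) (r - h) * ?S1 (r - h))
      = (\<Sum>e\<in>{x - h..?M - h}. II q (n - h) (e + h - h) * ?S1 (e + h - h))"
    by (rule sum.reindex_bij_betw[OF bij, symmetric])
  also have "\<dots> = (\<Sum>e\<in>{x - h..?M - h}. II q (n - h) e * ?S1 e)" by simp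
  also have "\<dots> = (\<Sum>e\<in>{..k - h}. II q (n - h) e * ?S1 e)"
  proof (rule sum.mono_neutral_left)
    show "{x - h..?M - h} \<subseteq> {..k - h}" by auto
    show "\<forall>e\<in>{..k - h} - {x - h..?M - h}. II q (n - h) e * ?S1 e = 0"
    proof
      fix e assume e: "e \<in> {..k - h} - {x - h..?M - h}"
      show "II q (n - h) e * ?S1 e = 0"
      proof (cases "e < x - h")
        case True
        then show ?thesis by simp
      next
        case False
        then have "e > ?M - h" using e by auto
        then have "n - h < e" using e hM by auto
        then show ?thesis by (simp add: II_zero)
      qed
    qed
  qed simp
  also have "\<dots> = (\<Sum>e\<in>{..k - h}. II q (n - h) e * ?S2 e)"
  proof (intro sum.cong refl)
    fix e assume e: "e \<in> {..k - h}"
    have "?S2 e = ?S1 e"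
    proof (rule sum.mono_neutral_right)
      show "{x - h..e} \<subseteq> {x - h..k - h}" using e by auto
      show "\<forall>i\<in>{x - h..k - h} - {x - h..e}. real ((k - h) choose i) * NN q (k - h) i e = 0"
        by (auto simp: NN_zero)
    qed simp
    then show "II q (n - h) e * ?S1 e = II q (n - h) e * ?S2 e" by simp
  qed
  also have "\<dots> = GG q (k - h) (n - h) (x - h)" by (simp add: GG_def)
  finally show ?thesis .
qed

lemma term_A:
  fixes q :: real
  assumes q: "q > 0" and hn: "h \<le> n" and hk: "h \<le> k"
  shows "real ((nT - k) choose (n - h)) * (q^(h * (n - h)) * q^(k * (nT - k - (n - h)))) / q^(k * (nT - k))
      = real ((nT - k) choose (n - h)) * q powi (- ((int n - int h) * (int k - int h)))"
proof (cases "n - h \<le> nT - k")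
  case True
  define a where "a = n - h"
  define b where "b = k - h"
  define N where "N = nT - k"
  have kN: "k * N = a * b + h * a + k * (N - a)"
  proof -
    have Na: "N = a + (N - a)" using True by (simp add: a_def N_def)
    have "k * N = k * a + k * (N - a)" using Na by (metis add_mult_distrib2)
    moreover have "k * a = a * b + h * a" using hk by (simp add: b_def algebra_simps flip: add_mult_distrib)
    ultimately show ?thesis by simp
  qed
  have ex: "(int n - int h) * (int k - int h) = int (a * b)" using hn hk by (simp add: a_def b_def of_nat_diff)
  have "q^(h * a) * q^(k * (N - a)) / q^(k * N) = 1 / q^(a * b)"
    unfolding kN using q by (simp add: power_add field_simps)
  also have "\<dots> = q powi (- ((int n - int h) * (int k - int h)))"
    unfolding ex by (simp only: power_int_minus power_int_of_nat) (simp add: divide_inverse)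
  finally have "q^(h * (n - h)) * q^(k * (nT - k - (n - h))) / q^(k * (nT - k)) = q powi (- ((int n - int h) * (int k - int h)))"
    by (simp add: a_def N_def)
  then show ?thesis by (metis times_divide_eq_right)
next
  case False
  have z: "real ((nT - k) choose (n - h)) = 0" using False by (simp add: binomial_eq_0)
  show ?thesis by (simp only: z)
qed

lemma final_algebra:
  fixes q :: real
  assumes q: "q > 0" and knT: "k \<le> nT" and nnT: "n \<le> nT"
  shows "(\<Sum>h\<in>{..min n k}. real (k choose h) * real ((nT - k) choose (n - h)) * val q k nT n x h) / (q^(k * (nT - k)) * real (nT choose n))
    = 1 / real (nT choose n) * (\<Sum>r\<in>{int x..min (int n) (int k)}. \<Sum>h\<in>{max 0 (int n - int nT + int k)..r}. Tm q k nT n x r h)"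
proof -
  let ?M = "min n k"
  define Z where "Z h = real (k choose h) * real ((nT - k) choose (n - h)) * q powi (- ((int n - int h) * (int k - int h)))" for h
  define S1 where "S1 h r = II q (n - h) (r - h) * (\<Sum>i\<in>{x - h..r - h}. real ((k - h) choose i) * NN q (k - h) i (r - h))" for h r
  have L: "(\<Sum>h\<in>{..?M}. real (k choose h) * real ((nT - k) choose (n - h)) * val q k nT n x h) / (q^(k * (nT - k)) * real (nT choose n))
      = 1 / real (nT choose n) * (\<Sum>h\<in>{..?M}. Z h * GG q (k - h) (n - h) (x - h))"
  proof -
    have t: "real (k choose h) * real ((nT - k) choose (n - h)) * val q k nT n x h / q^(k * (nT - k)) = Z h * GG q (k - h) (n - h) (x - h)"
      if h: "h \<in> {..?M}" for h
    proof -
      have hn: "h \<le> n" and hk: "h \<le> k" using h by auto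
      have "real (k choose h) * real ((nT - k) choose (n - h)) * val q k nT n x h / q^(k * (nT - k))
          = real (k choose h) * (real ((nT - k) choose (n - h)) * (q^(h * (n - h)) * q^(k * (nT - k - (n - h)))) / q^(k * (nT - k))) * GG q (k - h) (n - h) (x - h)"
        by (simp add: val_def)
      also have "\<dots> = real (k choose h) * (real ((nT - k) choose (n - h)) * q powi (- ((int n - int h) * (int k - int h)))) * GG q (k - h) (n - h) (x - h)"
        by (simp only: term_A[OF q hn hk])
      finally show ?thesis by (simp add: Z_def)
    qed
    have "(\<Sum>h\<in>{..?M}. real (k choose h) * real ((nT - k) choose (n - h)) * val q k nT n x h) / (q^(k * (nT - k)) * real (nT choose n))
        = ((\<Sum>h\<in>{..?M}. real (k choose h) * real ((nT - k) choose (n - h)) * val q k nT n x h) / q^(k * (nT - k))) / real (nT choose n)"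
      by (simp add: divide_divide_eq_left)
    also have "(\<Sum>h\<in>{..?M}. real (k choose h) * real ((nT - k) choose (n - h)) * val q k nT n x h) / q^(k * (nT - k))
        = (\<Sum>h\<in>{..?M}. real (k choose h) * real ((nT - k) choose (n - h)) * val q k nT n x h / q^(k * (nT - k)))"
      by (rule sum_divide_distrib)
    also have "\<dots> = (\<Sum>h\<in>{..?M}. Z h * GG q (k - h) (n - h) (x - h))" by (rule sum.cong[OF refl t])
    finally show ?thesis by simp
  qed
  have B3: "(\<Sum>r\<in>{int x..min (int n) (int k)}. \<Sum>h\<in>{max 0 (int n - int nT + int k)..r}. Tm q k nT n x r h)
      = (\<Sum>r\<in>{x..?M}. \<Sum>h\<in>{0..r}. Tm q k nT n x (int r) (int h))"
  proof -
    have "min (int n) (int k) = int ?M" by simp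
    hence "(\<Sum>r\<in>{int x..min (int n) (int k)}. \<Sum>h\<in>{max 0 (int n - int nT + int k)..r}. Tm q k nT n x r h)
        = (\<Sum>r\<in>{x..?M}. \<Sum>h\<in>{max 0 (int n - int nT + int k)..int r}. Tm q k nT n x (int r) h)"
      by (simp only: sum.atLeast_int_atMost_int_shift o_def)
    also have "\<dots> = (\<Sum>r\<in>{x..?M}. \<Sum>h\<in>{0..int r}. Tm q k nT n x (int r) h)"
    proof (rule sum.cong[OF refl])
      fix r assume r: "r \<in> {x..?M}"
      have sub: "{max 0 (int n - int nT + int k)..int r} \<subseteq> {0..int r}" by auto
      have zero: "\<forall>h\<in>{0..int r} - {max 0 (int n - int nT + int k)..int r}. Tm q k nT n x (int r) h = 0"
      proof
        fix h assume h: "h \<in> {0..int r} - {max 0 (int n - int nT + int k)..int r}"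
        then have "int n - h > int nT - int k" by auto
        then have "binom_int (int nT - int k) (int n - h) = 0" by (simp add: binom_int_def)
        then show "Tm q k nT n x (int r) h = 0" by (simp add: Tm_def)
      qed
      show "(\<Sum>h\<in>{max 0 (int n - int nT + int k)..int r}. Tm q k nT n x (int r) h) = (\<Sum>h\<in>{0..int r}. Tm q k nT n x (int r) h)"
        by (rule sum.mono_neutral_left[OF _ sub zero]) simp
    qed
    also have "\<dots> = (\<Sum>r\<in>{x..?M}. \<Sum>h\<in>{0..r}. Tm q k nT n x (int r) (int h))"
    proof (rule sum.cong[OF refl])
      fix r
      have "{0..int r} = {int 0..int r}" by simp
      then show "(\<Sum>h\<in>{0..int r}. Tm q k nT n x (int r) h) = (\<Sum>h\<in>{0..r}. Tm q k nT n x (int r) (int h))"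
        by (simp only: sum.atLeast_int_atMost_int_shift o_def)
    qed
    finally show ?thesis .
  qed
  have B1: "(\<Sum>r\<in>{x..?M}. \<Sum>h\<in>{0..r}. Tm q k nT n x (int r) (int h)) = (\<Sum>r\<in>{x..?M}. \<Sum>h\<in>{0..r}. Z h * S1 h r)"
  proof (intro sum.cong refl)
    fix r h assume r: "r \<in> {x..?M}" and h: "h \<in> {0..r}"
    have "Tm q k nT n x (int r) (int h) = real (k choose h) * real ((nT - k) choose (n - h))
      * q powi (- ((int n - int h) * (int k - int h))) * II q (n - h) (r - h)
      * (\<Sum>i\<in>{x - h..r - h}. real ((k - h) choose i) * NN q (k - h) i (r - h))"
      by (rule Tm_nat) (use r h knT in auto)
    then show "Tm q k nT n x (int r) (int h) = Z h * S1 h r" by (simp add: Z_def S1_def mult.assoc)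
  qed
  have SW: "(\<Sum>r\<in>{x..?M}. \<Sum>h\<in>{0..r}. Z h * S1 h r) = (\<Sum>h\<in>{0..?M}. \<Sum>r\<in>{r\<in>{x..?M}. h \<le> r}. Z h * S1 h r)"
  proof -
    have e1: "{h\<in>{0..?M}. h \<le> r} = {0..r}" if "r \<in> {x..?M}" for r using that by auto
    have a: "(\<Sum>r\<in>{x..?M}. \<Sum>h\<in>{0..r}. Z h * S1 h r) = (\<Sum>r\<in>{x..?M}. sum (\<lambda>h. Z h * S1 h r) {h\<in>{0..?M}. h \<le> r})"
    proof (rule sum.cong[OF refl])
      fix r assume r: "r \<in> {x..?M}"
      show "(\<Sum>h\<in>{0..r}. Z h * S1 h r) = sum (\<lambda>h. Z h * S1 h r) {h\<in>{0..?M}. h \<le> r}"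
        unfolding e1[OF r] ..
    qed
    have b: "(\<Sum>r\<in>{x..?M}. sum (\<lambda>h. Z h * S1 h r) {h\<in>{0..?M}. h \<le> r}) = (\<Sum>h\<in>{0..?M}. \<Sum>r | r \<in> {x..?M} \<and> h \<le> r. Z h * S1 h r)"
      by (rule sum.swap_restrict) auto
    show ?thesis using a b by simp
  qed
  have IN: "(\<Sum>h\<in>{0..?M}. \<Sum>r\<in>{r\<in>{x..?M}. h \<le> r}. Z h * S1 h r) = (\<Sum>h\<in>{..?M}. Z h * GG q (k - h) (n - h) (x - h))"
  proof -
    have "(\<Sum>h\<in>{0..?M}. \<Sum>r\<in>{r\<in>{x..?M}. h \<le> r}. Z h * S1 h r) = (\<Sum>h\<in>{0..?M}. Z h * (\<Sum>r\<in>{r\<in>{x..?M}. h \<le> r}. S1 h r))"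
      by (simp add: sum_distrib_left)
    also have "\<dots> = (\<Sum>h\<in>{0..?M}. Z h * GG q (k - h) (n - h) (x - h))"
    proof (rule sum.cong[OF refl])
      fix h assume h: "h \<in> {0..?M}"
      have "(\<Sum>r\<in>{r\<in>{x..?M}. h \<le> r}. S1 h r) = GG q (k - h) (n - h) (x - h)"
        unfolding S1_def by (rule inner_sum_h) (use h in auto)
      then show "Z h * (\<Sum>r\<in>{r\<in>{x..?M}. h \<le> r}. S1 h r) = Z h * GG q (k - h) (n - h) (x - h)" by simp
    qed
    finally show ?thesis by (simp only: atLeast0AtMost)
  qed
  show ?thesis unfolding L B3 B1 SW IN ..
qed

theorem proposition2:
  fixes k nT n x :: nat
  assumes "1 \<le> k" "k \<le> nT" "1 \<le> n" "n \<le> nT" "x \<le> k"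
  shows "measure_pmf.prob
      (pmf_of_set (({0..<nT - k} \<rightarrow>\<^sub>E ({0..<k} \<rightarrow>\<^sub>E (UNIV :: ('a::{field,finite}) set)))
                   \<times> {S. S \<subseteq> {0..<nT} \<and> card S = n}))
      {(v, S). x \<le> card (recovered k v S)}
    = 1 / real (nT choose n) *
      (\<Sum>r\<in>{int x..min (int n) (int k)}.
        \<Sum>h\<in>{max 0 (int n - int nT + int k)..r}.
          binom_int (int k) h * binom_int (int nT - int k) (int n - h)
          * (real CARD('a)) powi (- ((int n - h) * (int k - h)))
          * (\<Prod>l\<in>{0..<r - h}. (real CARD('a)) powi (int n - h) - (real CARD('a)) powi l)
          * (\<Sum>i\<in>{max 0 (int x - h)..r - h}.
               binom_int (int k - h) i *
               (\<Sum>j\<in>{0..int k - h - i}.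
                  (-1) powi j * binom_int (int k - h - i) j
                  * qbinom (real CARD('a)) (int k - h - i - j) (r - h - i - j))))"
proof -
  let ?q = "real CARD('a)"
  have q: "?q > 0" by simp
  have P: "measure_pmf.prob
      (pmf_of_set (({0..<nT - k} \<rightarrow>\<^sub>E ({0..<k} \<rightarrow>\<^sub>E (UNIV :: 'a set))) \<times> {S. S \<subseteq> {0..<nT} \<and> card S = n}))
      {(v, S). x \<le> card (recovered k v S)}
    = (\<Sum>h\<in>{..min n k}. real (k choose h) * real ((nT - k) choose (n - h)) * val ?q k nT n x h)
      / (?q^(k * (nT - k)) * real (nT choose n))"
    by (rule prob_formula) (use assms in auto)
  also have "\<dots> = 1 / real (nT choose n) * (\<Sum>r\<in>{int x..min (int n) (int k)}. \<Sum>h\<in>{max 0 (int n - int nT + int k)..r}. Tm ?q k nT n x r h)"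
    by (rule final_algebra[OF q]) (use assms in auto)
  finally show ?thesis by (simp only: Tm_def)
qed

end
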